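(* In the setting of the context, assume $G_{xy}^{[1]}=1$, $G_x^{[1]}\neq1$ and $G_x/G_x^{[1]}\cong A_5$. Then $G_x\cong A_5\times A_4$ and $G_e\cong A_4\wr C_2$.
   Context: $\mathcal{A}=(G_x,G_e,G_{xy})$ is a finite, primitive amalgam of degree $(5,2)$ (no nontrivial subgroup of $G_{xy}$ normal in both $G_x$ and $G_e$; $|G_x:G_{xy}|=5$, $|G_e:G_{xy}|=2$), $G=G_x*_{G_{xy}}G_e$ acts on the coset graph (5-valent tree) $\Gamma$, $x$ is the vertex with stabiliser $G_x$, $y$ the neighbour with $G_e$ the setwise stabiliser of $\{x,y\}$ and $G_x\cap G_y=G_{xy}$. $G_z^{[1]}$ is the pointwise stabiliser of $z$ and its neighbours, $G_{xy}^{[1]}=G_x^{[1]}\cap G_y^{[1]}$. *)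

theory Defs
  imports "HOL-Algebra.Sym_Groups"
begin

text \<open>An amalgam (Gx, Ge, Gxy) is represented by two subgroups Gx, Ge of an ambient
  group G (e.g. the free amalgamated product) with Gxy = Gx \<inter> Ge.\<close>

definition sub_index :: "('a, 'b) monoid_scheme \<Rightarrow> 'a set \<Rightarrow> 'a set \<Rightarrow> nat" where
  "sub_index G A B = card (rcosets\<^bsub>G\<lparr>carrier := A\<rparr>\<^esub> B)"

definition primitive_amalgam :: "('a, 'b) monoid_scheme \<Rightarrow> 'a set \<Rightarrow> 'a set \<Rightarrow> bool" where
  "primitive_amalgam G Gx Ge \<longleftrightarrow>
     (\<forall>N. N \<subseteq> Gx \<inter> Ge \<and> N \<lhd> G\<lparr>carrier := Gx\<rparr> \<and> N \<lhd> G\<lparr>carrier := Ge\<rparr> \<longrightarrow> N = {\<one>\<^bsub>G\<^esub>})"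

text \<open>Kernel of the action of a vertex stabiliser A on the neighbours of the vertex,
  the neighbours being identified with the cosets a B (a \<in> A), B the arc stabiliser:
  the pointwise stabiliser of the vertex and its neighbours.\<close>
definition kernel1 :: "('a, 'b) monoid_scheme \<Rightarrow> 'a set \<Rightarrow> 'a set \<Rightarrow> 'a set" where
  "kernel1 G A B = {g \<in> A. \<forall>h \<in> A. inv\<^bsub>G\<^esub> h \<otimes>\<^bsub>G\<^esub> g \<otimes>\<^bsub>G\<^esub> h \<in> B}"

text \<open>An element of Ge swapping x and y.\<close>
definition flip_elt :: "('a, 'b) monoid_scheme \<Rightarrow> 'a set \<Rightarrow> 'a set \<Rightarrow> 'a" where
  "flip_elt G Gx Ge = (SOME t. t \<in> Ge \<and> t \<notin> Gx)"

text \<open>Stabiliser of the neighbour y = t x of x.\<close>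
definition stab_y :: "('a, 'b) monoid_scheme \<Rightarrow> 'a set \<Rightarrow> 'a set \<Rightarrow> 'a set" where
  "stab_y G Gx Ge = (\<lambda>g. flip_elt G Gx Ge \<otimes>\<^bsub>G\<^esub> g \<otimes>\<^bsub>G\<^esub> inv\<^bsub>G\<^esub> (flip_elt G Gx Ge)) ` Gx"

definition Gx1 :: "('a, 'b) monoid_scheme \<Rightarrow> 'a set \<Rightarrow> 'a set \<Rightarrow> 'a set" where
  "Gx1 G Gx Ge = kernel1 G Gx (Gx \<inter> Ge)"

definition Gy1 :: "('a, 'b) monoid_scheme \<Rightarrow> 'a set \<Rightarrow> 'a set \<Rightarrow> 'a set" where
  "Gy1 G Gx Ge = kernel1 G (stab_y G Gx Ge) (Gx \<inter> Ge)"

definition Gxy1 :: "('a, 'b) monoid_scheme \<Rightarrow> 'a set \<Rightarrow> 'a set \<Rightarrow> 'a set" where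
  "Gxy1 G Gx Ge = Gx1 G Gx Ge \<inter> Gy1 G Gx Ge"

text \<open>Wreath product H wr C2 = (H \<times> H) \<rtimes> C2, C2 = bool under xor, acting by swapping.\<close>
definition wreath_mult :: "('a, 'b) monoid_scheme \<Rightarrow> 'a \<times> 'a \<times> bool \<Rightarrow> 'a \<times> 'a \<times> bool \<Rightarrow> 'a \<times> 'a \<times> bool" where
  "wreath_mult H p q =
     (let (a, b, s) = p; (c, d, u) = q in
      if s then (a \<otimes>\<^bsub>H\<^esub> d, b \<otimes>\<^bsub>H\<^esub> c, s \<noteq> u)
           else (a \<otimes>\<^bsub>H\<^esub> c, b \<otimes>\<^bsub>H\<^esub> d, s \<noteq> u))"

definition wreath_C2 :: "('a, 'b) monoid_scheme \<Rightarrow> ('a \<times> 'a \<times> bool) monoid" where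
  "wreath_C2 H = \<lparr> carrier = carrier H \<times> carrier H \<times> (UNIV :: bool set),
     mult = wreath_mult H, one = (\<one>\<^bsub>H\<^esub>, \<one>\<^bsub>H\<^esub>, False) \<rparr>"

end

theory Submission
  imports Defs "HOL-Algebra.Group_Action"
begin

definition lp :: "nat list \<Rightarrow> nat \<Rightarrow> nat" where
  "lp xs x = (if 1 \<le> x \<and> x \<le> length xs then xs ! (x - 1) else x)"

definition ok5 :: "nat list \<Rightarrow> bool" where
  "ok5 xs \<longleftrightarrow> length xs = 5 \<and> list_all (\<lambda>y. 1 \<le> y \<and> y \<le> 5) xs"

definition lcomp :: "nat list \<Rightarrow> nat list \<Rightarrow> nat list" where
  "lcomp xs ys = map (\<lambda>y. xs ! (y - 1)) ys"

lemma lp_comp: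
  assumes "ok5 xs" "ok5 ys"
  shows "lp xs \<circ> lp ys = lp (lcomp xs ys)"
proof
  fix x
  show "(lp xs \<circ> lp ys) x = lp (lcomp xs ys) x"
  proof (cases "1 \<le> x \<and> x \<le> 5")
    case True
    then have "ys ! (x - 1) \<in> set ys" using assms by (auto simp: ok5_def)
    then have "1 \<le> ys ! (x - 1) \<and> ys ! (x - 1) \<le> 5" using assms by (auto simp: ok5_def list_all_iff)
    then show ?thesis using True assms by (auto simp: lp_def lcomp_def ok5_def)
  next
    case False
    then show ?thesis using assms by (auto simp: lp_def lcomp_def ok5_def)
  qed
qed

lemma ok5_lcomp: "ok5 a \<Longrightarrow> ok5 b \<Longrightarrow> ok5 (lcomp a b)"
  unfolding ok5_def lcomp_def list_all_iff
  by (auto simp: nth_mem)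

lemma lp_inj:
  assumes "length xs = 5" "length ys = 5" "lp xs = lp ys"
  shows "xs = ys"
proof (rule nth_equalityI)
  show "length xs = length ys" using assms by simp
  fix i assume "i < length xs"
  then have "lp xs (i+1) = lp ys (i+1)" using assms by simp
  moreover have "length xs = 5" "length ys = 5" using assms by auto
  ultimately show "xs ! i = ys ! i" using \<open>i < length xs\<close> by (simp add: lp_def)
qed

lemma lp_id: "lp [1,2,3,4,5] = id"
proof
  fix x show "lp [1,2,3,4,5] x = id x"
    by (cases "x = 1"; cases "x = 2"; cases "x = 3"; cases "x = 4"; cases "x = 5") (auto simp: lp_def)
qed

lemma g1_eq: "lp [2,3,1,4,5] = transpose 1 2 \<circ> transpose 2 3"
proof
  fix x show "lp [2,3,1,4,5] x = (transpose 1 2 \<circ> transpose 2 3) x"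
    by (cases "x = 1"; cases "x = 2"; cases "x = 3"; cases "x = 4"; cases "x = 5") (auto simp: lp_def transpose_def)
qed

lemma g2_eq: "lp [2,3,4,5,1] = transpose 1 2 \<circ> transpose 2 3 \<circ> transpose 3 4 \<circ> transpose 4 5"
proof
  fix x show "lp [2,3,4,5,1] x = (transpose 1 2 \<circ> transpose 2 3 \<circ> transpose 3 4 \<circ> transpose 4 5) x"
    by (cases "x = 1"; cases "x = 2"; cases "x = 3"; cases "x = 4"; cases "x = 5") (auto simp: lp_def transpose_def)
qed

lemma g1_in: "lp [2,3,1,4,5] \<in> carrier (alt_group 5)"
  unfolding alt_group_carrier g1_eq
  by (auto intro!: permutes_compose permutes_swap_id simp: evenperm_comp evenperm_swap permutation_swap_id)

lemma g2_in: "lp [2,3,4,5,1] \<in> carrier (alt_group 5)"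
  unfolding alt_group_carrier g2_eq
  by (auto intro!: permutes_compose permutes_swap_id simp: evenperm_comp evenperm_swap permutation_swap_id permutation_compose)



definition L60 :: "nat list list" where "L60 = [[1,2,3,4,5], [2,3,1,4,5], [2,3,4,5,1], [3,1,2,4,5], [3,1,4,5,2], [3,4,2,5,1], [3,4,5,1,2], [1,2,4,5,3], [1,4,3,5,2], [1,4,5,2,3], [4,2,3,5,1], [4,2,5,1,3], [4,5,3,1,2], [4,5,1,2,3], [2,4,1,5,3], [2,4,5,3,1], [4,3,1,5,2], [4,3,5,2,1], [4,5,2,3,1], [2,3,5,1,4], [2,5,4,1,3], [2,5,1,3,4], [5,3,4,1,2], [5,3,1,2,4], [5,1,4,2,3], [5,1,2,3,4], [4,1,2,5,3], [4,1,5,3,2], [3,1,5,2,4], [3,5,4,2,1], [3,5,2,1,4], [5,2,4,3,1], [5,2,3,1,4], [3,5,1,4,2], [5,4,2,1,3], [5,4,1,3,2], [5,1,3,4,2], [3,4,1,2,5], [1,4,2,3,5], [1,2,5,3,4], [1,5,4,3,2], [1,5,3,2,4], [1,5,2,4,3], [5,4,3,2,1], [5,2,1,4,3], [2,4,3,1,5], [4,2,1,3,5], [4,1,3,2,5], [1,3,5,4,2], [1,3,4,2,5], [2,5,3,4,1], [5,3,2,4,1], [4,3,2,1,5], [2,1,5,4,3], [2,1,4,3,5], [2,1,3,5,4], [1,3,2,5,4], [3,2,5,4,1], [3,2,4,1,5], [3,2,1,5,4]]"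
definition L12 :: "nat list list" where "L12 = [[1,2,3,4,5], [2,3,1,4,5], [3,1,2,4,5], [3,4,1,2,5], [1,4,2,3,5], [2,4,3,1,5], [4,2,1,3,5], [4,1,3,2,5], [1,3,4,2,5], [4,3,2,1,5], [2,1,4,3,5], [3,2,4,1,5]]"
definition Vl :: "nat list list" where "Vl = [[1,2,3,4,5], [2,1,4,3,5], [3,4,1,2,5], [4,3,2,1,5]]"

locale nclos4 =
  fixes N :: "(nat \<Rightarrow> nat) set"
  assumes mul: "x \<in> N \<Longrightarrow> y \<in> N \<Longrightarrow> x \<circ> y \<in> N"
  and cj1: "x \<in> N \<Longrightarrow> lp [2,3,1,4,5] \<circ> x \<circ> lp [3,1,2,4,5] \<in> N"
  and cj2: "x \<in> N \<Longrightarrow> lp [2,1,4,3,5] \<circ> x \<circ> lp [2,1,4,3,5] \<in> N"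
begin
lemma mulL: "lp a \<in> N \<Longrightarrow> lp b \<in> N \<Longrightarrow> ok5 a \<Longrightarrow> ok5 b \<Longrightarrow> lcomp a b = c \<Longrightarrow> lp c \<in> N"
  using mul[of "lp a" "lp b"] lp_comp[of a b] by simp
lemma cj1L: "lp a \<in> N \<Longrightarrow> ok5 a \<Longrightarrow> lcomp (lcomp [2,3,1,4,5] a) [3,1,2,4,5] = c \<Longrightarrow> lp c \<in> N"
proof -
  assume a: "lp a \<in> N" "ok5 a" "lcomp (lcomp [2,3,1,4,5] a) [3,1,2,4,5] = c"
  have "ok5 [2,3,1,4,5]" "ok5 [3,1,2,4,5]" by (simp_all add: ok5_def)
  then have "lp [2,3,1,4,5] \<circ> lp a \<circ> lp [3,1,2,4,5] = lp c"
    using a by (simp add: lp_comp ok5_lcomp)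
  then show ?thesis using cj1[OF a(1)] by simp
qed
lemma cj2L: "lp a \<in> N \<Longrightarrow> ok5 a \<Longrightarrow> lcomp (lcomp [2,1,4,3,5] a) [2,1,4,3,5] = c \<Longrightarrow> lp c \<in> N"
proof -
  assume a: "lp a \<in> N" "ok5 a" "lcomp (lcomp [2,1,4,3,5] a) [2,1,4,3,5] = c"
  have "ok5 [2,1,4,3,5]" "ok5 [2,1,4,3,5]" by (simp_all add: ok5_def)
  then have "lp [2,1,4,3,5] \<circ> lp a \<circ> lp [2,1,4,3,5] = lp c"
    using a by (simp add: lp_comp ok5_lcomp)
  then show ?thesis using cj2[OF a(1)] by simp
qed
lemma from_h23145: assumes h23145: "lp [2,3,1,4,5] \<in> N" shows "\<forall>v\<in>set Vl. lp v \<in> N"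
proof -
  have h31245: "lp [3,1,2,4,5] \<in> N" by (rule mulL[OF h23145 h23145]) (simp_all add: ok5_def lcomp_def)
  have h12345: "lp [1,2,3,4,5] \<in> N" by (rule mulL[OF h23145 h31245]) (simp_all add: ok5_def lcomp_def)
  have h41325: "lp [4,1,3,2,5] \<in> N" by (rule cj2L[OF h23145]) (simp_all add: ok5_def lcomp_def)
  have h42135: "lp [4,2,1,3,5] \<in> N" by (rule mulL[OF h23145 h41325]) (simp_all add: ok5_def lcomp_def)
  have h21435: "lp [2,1,4,3,5] \<in> N" by (rule mulL[OF h41325 h42135]) (simp_all add: ok5_def lcomp_def)
  have h34125: "lp [3,4,1,2,5] \<in> N" by (rule mulL[OF h41325 h31245]) (simp_all add: ok5_def lcomp_def)
  have h43215: "lp [4,3,2,1,5] \<in> N" by (rule mulL[OF h23145 h42135]) (simp_all add: ok5_def lcomp_def)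
  show ?thesis unfolding Vl_def using h12345 h21435 h34125 h43215 by simp
qed
lemma from_h31245: assumes h31245: "lp [3,1,2,4,5] \<in> N" shows "\<forall>v\<in>set Vl. lp v \<in> N"
proof -
  have h23145: "lp [2,3,1,4,5] \<in> N" by (rule mulL[OF h31245 h31245]) (simp_all add: ok5_def lcomp_def)
  have h12345: "lp [1,2,3,4,5] \<in> N" by (rule mulL[OF h31245 h23145]) (simp_all add: ok5_def lcomp_def)
  have h24315: "lp [2,4,3,1,5] \<in> N" by (rule cj2L[OF h31245]) (simp_all add: ok5_def lcomp_def)
  have h14235: "lp [1,4,2,3,5] \<in> N" by (rule mulL[OF h31245 h24315]) (simp_all add: ok5_def lcomp_def)
  have h21435: "lp [2,1,4,3,5] \<in> N" by (rule mulL[OF h24315 h14235]) (simp_all add: ok5_def lcomp_def)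
  have h34125: "lp [3,4,1,2,5] \<in> N" by (rule mulL[OF h31245 h14235]) (simp_all add: ok5_def lcomp_def)
  have h43215: "lp [4,3,2,1,5] \<in> N" by (rule mulL[OF h24315 h23145]) (simp_all add: ok5_def lcomp_def)
  show ?thesis unfolding Vl_def using h12345 h21435 h34125 h43215 by simp
qed
lemma from_h34125: assumes h34125: "lp [3,4,1,2,5] \<in> N" shows "\<forall>v\<in>set Vl. lp v \<in> N"
proof -
  have h12345: "lp [1,2,3,4,5] \<in> N" by (rule mulL[OF h34125 h34125]) (simp_all add: ok5_def lcomp_def)
  have h21435: "lp [2,1,4,3,5] \<in> N" by (rule cj1L[OF h34125]) (simp_all add: ok5_def lcomp_def)
  have h43215: "lp [4,3,2,1,5] \<in> N" by (rule mulL[OF h34125 h21435]) (simp_all add: ok5_def lcomp_def)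
  show ?thesis unfolding Vl_def using h12345 h21435 h34125 h43215 by simp
qed
lemma from_h14235: assumes h14235: "lp [1,4,2,3,5] \<in> N" shows "\<forall>v\<in>set Vl. lp v \<in> N"
proof -
  have h13425: "lp [1,3,4,2,5] \<in> N" by (rule mulL[OF h14235 h14235]) (simp_all add: ok5_def lcomp_def)
  have h12345: "lp [1,2,3,4,5] \<in> N" by (rule mulL[OF h14235 h13425]) (simp_all add: ok5_def lcomp_def)
  have h32415: "lp [3,2,4,1,5] \<in> N" by (rule cj1L[OF h14235]) (simp_all add: ok5_def lcomp_def)
  have h24315: "lp [2,4,3,1,5] \<in> N" by (rule mulL[OF h14235 h32415]) (simp_all add: ok5_def lcomp_def)
  have h21435: "lp [2,1,4,3,5] \<in> N" by (rule mulL[OF h32415 h24315]) (simp_all add: ok5_def lcomp_def)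
  have h34125: "lp [3,4,1,2,5] \<in> N" by (rule mulL[OF h32415 h13425]) (simp_all add: ok5_def lcomp_def)
  have h43215: "lp [4,3,2,1,5] \<in> N" by (rule mulL[OF h14235 h24315]) (simp_all add: ok5_def lcomp_def)
  show ?thesis unfolding Vl_def using h12345 h21435 h34125 h43215 by simp
qed
lemma from_h24315: assumes h24315: "lp [2,4,3,1,5] \<in> N" shows "\<forall>v\<in>set Vl. lp v \<in> N"
proof -
  have h41325: "lp [4,1,3,2,5] \<in> N" by (rule mulL[OF h24315 h24315]) (simp_all add: ok5_def lcomp_def)
  have h12345: "lp [1,2,3,4,5] \<in> N" by (rule mulL[OF h24315 h41325]) (simp_all add: ok5_def lcomp_def)
  have h13425: "lp [1,3,4,2,5] \<in> N" by (rule cj1L[OF h24315]) (simp_all add: ok5_def lcomp_def)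
  have h21435: "lp [2,1,4,3,5] \<in> N" by (rule mulL[OF h13425 h41325]) (simp_all add: ok5_def lcomp_def)
  have h31245: "lp [3,1,2,4,5] \<in> N" by (rule cj2L[OF h24315]) (simp_all add: ok5_def lcomp_def)
  have h32415: "lp [3,2,4,1,5] \<in> N" by (rule mulL[OF h24315 h31245]) (simp_all add: ok5_def lcomp_def)
  have h34125: "lp [3,4,1,2,5] \<in> N" by (rule mulL[OF h24315 h32415]) (simp_all add: ok5_def lcomp_def)
  have h23145: "lp [2,3,1,4,5] \<in> N" by (rule mulL[OF h24315 h13425]) (simp_all add: ok5_def lcomp_def)
  have h43215: "lp [4,3,2,1,5] \<in> N" by (rule mulL[OF h24315 h23145]) (simp_all add: ok5_def lcomp_def)
  show ?thesis unfolding Vl_def using h12345 h21435 h34125 h43215 by simp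
qed
lemma from_h42135: assumes h42135: "lp [4,2,1,3,5] \<in> N" shows "\<forall>v\<in>set Vl. lp v \<in> N"
proof -
  have h32415: "lp [3,2,4,1,5] \<in> N" by (rule mulL[OF h42135 h42135]) (simp_all add: ok5_def lcomp_def)
  have h12345: "lp [1,2,3,4,5] \<in> N" by (rule mulL[OF h42135 h32415]) (simp_all add: ok5_def lcomp_def)
  have h24315: "lp [2,4,3,1,5] \<in> N" by (rule cj1L[OF h42135]) (simp_all add: ok5_def lcomp_def)
  have h23145: "lp [2,3,1,4,5] \<in> N" by (rule mulL[OF h42135 h24315]) (simp_all add: ok5_def lcomp_def)
  have h21435: "lp [2,1,4,3,5] \<in> N" by (rule mulL[OF h42135 h23145]) (simp_all add: ok5_def lcomp_def)
  have h13425: "lp [1,3,4,2,5] \<in> N" by (rule cj2L[OF h42135]) (simp_all add: ok5_def lcomp_def)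
  have h41325: "lp [4,1,3,2,5] \<in> N" by (rule mulL[OF h42135 h13425]) (simp_all add: ok5_def lcomp_def)
  have h34125: "lp [3,4,1,2,5] \<in> N" by (rule mulL[OF h42135 h41325]) (simp_all add: ok5_def lcomp_def)
  have h43215: "lp [4,3,2,1,5] \<in> N" by (rule mulL[OF h24315 h23145]) (simp_all add: ok5_def lcomp_def)
  show ?thesis unfolding Vl_def using h12345 h21435 h34125 h43215 by simp
qed
lemma from_h41325: assumes h41325: "lp [4,1,3,2,5] \<in> N" shows "\<forall>v\<in>set Vl. lp v \<in> N"
proof -
  have h24315: "lp [2,4,3,1,5] \<in> N" by (rule mulL[OF h41325 h41325]) (simp_all add: ok5_def lcomp_def)
  have h12345: "lp [1,2,3,4,5] \<in> N" by (rule mulL[OF h41325 h24315]) (simp_all add: ok5_def lcomp_def)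
  have h14235: "lp [1,4,2,3,5] \<in> N" by (rule cj1L[OF h41325]) (simp_all add: ok5_def lcomp_def)
  have h42135: "lp [4,2,1,3,5] \<in> N" by (rule mulL[OF h41325 h14235]) (simp_all add: ok5_def lcomp_def)
  have h21435: "lp [2,1,4,3,5] \<in> N" by (rule mulL[OF h41325 h42135]) (simp_all add: ok5_def lcomp_def)
  have h34125: "lp [3,4,1,2,5] \<in> N" by (rule mulL[OF h14235 h42135]) (simp_all add: ok5_def lcomp_def)
  have h23145: "lp [2,3,1,4,5] \<in> N" by (rule cj2L[OF h41325]) (simp_all add: ok5_def lcomp_def)
  have h13425: "lp [1,3,4,2,5] \<in> N" by (rule mulL[OF h41325 h23145]) (simp_all add: ok5_def lcomp_def)
  have h43215: "lp [4,3,2,1,5] \<in> N" by (rule mulL[OF h41325 h13425]) (simp_all add: ok5_def lcomp_def)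
  show ?thesis unfolding Vl_def using h12345 h21435 h34125 h43215 by simp
qed
lemma from_h13425: assumes h13425: "lp [1,3,4,2,5] \<in> N" shows "\<forall>v\<in>set Vl. lp v \<in> N"
proof -
  have h14235: "lp [1,4,2,3,5] \<in> N" by (rule mulL[OF h13425 h13425]) (simp_all add: ok5_def lcomp_def)
  have h12345: "lp [1,2,3,4,5] \<in> N" by (rule mulL[OF h13425 h14235]) (simp_all add: ok5_def lcomp_def)
  have h42135: "lp [4,2,1,3,5] \<in> N" by (rule cj1L[OF h13425]) (simp_all add: ok5_def lcomp_def)
  have h23145: "lp [2,3,1,4,5] \<in> N" by (rule mulL[OF h13425 h42135]) (simp_all add: ok5_def lcomp_def)
  have h21435: "lp [2,1,4,3,5] \<in> N" by (rule mulL[OF h42135 h23145]) (simp_all add: ok5_def lcomp_def)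
  have h34125: "lp [3,4,1,2,5] \<in> N" by (rule mulL[OF h13425 h23145]) (simp_all add: ok5_def lcomp_def)
  have h43215: "lp [4,3,2,1,5] \<in> N" by (rule mulL[OF h42135 h14235]) (simp_all add: ok5_def lcomp_def)
  show ?thesis unfolding Vl_def using h12345 h21435 h34125 h43215 by simp
qed
lemma from_h43215: assumes h43215: "lp [4,3,2,1,5] \<in> N" shows "\<forall>v\<in>set Vl. lp v \<in> N"
proof -
  have h12345: "lp [1,2,3,4,5] \<in> N" by (rule mulL[OF h43215 h43215]) (simp_all add: ok5_def lcomp_def)
  have h34125: "lp [3,4,1,2,5] \<in> N" by (rule cj1L[OF h43215]) (simp_all add: ok5_def lcomp_def)
  have h21435: "lp [2,1,4,3,5] \<in> N" by (rule mulL[OF h43215 h34125]) (simp_all add: ok5_def lcomp_def)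
  show ?thesis unfolding Vl_def using h12345 h21435 h34125 h43215 by simp
qed
lemma from_h21435: assumes h21435: "lp [2,1,4,3,5] \<in> N" shows "\<forall>v\<in>set Vl. lp v \<in> N"
proof -
  have h12345: "lp [1,2,3,4,5] \<in> N" by (rule mulL[OF h21435 h21435]) (simp_all add: ok5_def lcomp_def)
  have h43215: "lp [4,3,2,1,5] \<in> N" by (rule cj1L[OF h21435]) (simp_all add: ok5_def lcomp_def)
  have h34125: "lp [3,4,1,2,5] \<in> N" by (rule mulL[OF h21435 h43215]) (simp_all add: ok5_def lcomp_def)
  show ?thesis unfolding Vl_def using h12345 h21435 h34125 h43215 by simp
qed
lemma from_h32415: assumes h32415: "lp [3,2,4,1,5] \<in> N" shows "\<forall>v\<in>set Vl. lp v \<in> N"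
proof -
  have h42135: "lp [4,2,1,3,5] \<in> N" by (rule mulL[OF h32415 h32415]) (simp_all add: ok5_def lcomp_def)
  have h12345: "lp [1,2,3,4,5] \<in> N" by (rule mulL[OF h32415 h42135]) (simp_all add: ok5_def lcomp_def)
  have h41325: "lp [4,1,3,2,5] \<in> N" by (rule cj1L[OF h32415]) (simp_all add: ok5_def lcomp_def)
  have h21435: "lp [2,1,4,3,5] \<in> N" by (rule mulL[OF h41325 h42135]) (simp_all add: ok5_def lcomp_def)
  have h13425: "lp [1,3,4,2,5] \<in> N" by (rule mulL[OF h32415 h41325]) (simp_all add: ok5_def lcomp_def)
  have h34125: "lp [3,4,1,2,5] \<in> N" by (rule mulL[OF h32415 h13425]) (simp_all add: ok5_def lcomp_def)
  have h14235: "lp [1,4,2,3,5] \<in> N" by (rule cj2L[OF h32415]) (simp_all add: ok5_def lcomp_def)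
  have h31245: "lp [3,1,2,4,5] \<in> N" by (rule mulL[OF h32415 h14235]) (simp_all add: ok5_def lcomp_def)
  have h43215: "lp [4,3,2,1,5] \<in> N" by (rule mulL[OF h32415 h31245]) (simp_all add: ok5_def lcomp_def)
  show ?thesis unfolding Vl_def using h12345 h21435 h34125 h43215 by simp
qed
end
locale nclos5 =
  fixes N :: "(nat \<Rightarrow> nat) set"
  assumes mul: "x \<in> N \<Longrightarrow> y \<in> N \<Longrightarrow> x \<circ> y \<in> N"
  and cj1: "x \<in> N \<Longrightarrow> lp [2,3,1,4,5] \<circ> x \<circ> lp [3,1,2,4,5] \<in> N"
  and cj2: "x \<in> N \<Longrightarrow> lp [2,3,4,5,1] \<circ> x \<circ> lp [5,1,2,3,4] \<in> N"
begin
lemma mulL: "lp a \<in> N \<Longrightarrow> lp b \<in> N \<Longrightarrow> ok5 a \<Longrightarrow> ok5 b \<Longrightarrow> lcomp a b = c \<Longrightarrow> lp c \<in> N"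
  using mul[of "lp a" "lp b"] lp_comp[of a b] by simp
lemma cj1L: "lp a \<in> N \<Longrightarrow> ok5 a \<Longrightarrow> lcomp (lcomp [2,3,1,4,5] a) [3,1,2,4,5] = c \<Longrightarrow> lp c \<in> N"
proof -
  assume a: "lp a \<in> N" "ok5 a" "lcomp (lcomp [2,3,1,4,5] a) [3,1,2,4,5] = c"
  have "ok5 [2,3,1,4,5]" "ok5 [3,1,2,4,5]" by (simp_all add: ok5_def)
  then have "lp [2,3,1,4,5] \<circ> lp a \<circ> lp [3,1,2,4,5] = lp c"
    using a by (simp add: lp_comp ok5_lcomp)
  then show ?thesis using cj1[OF a(1)] by simp
qed
lemma cj2L: "lp a \<in> N \<Longrightarrow> ok5 a \<Longrightarrow> lcomp (lcomp [2,3,4,5,1] a) [5,1,2,3,4] = c \<Longrightarrow> lp c \<in> N"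
proof -
  assume a: "lp a \<in> N" "ok5 a" "lcomp (lcomp [2,3,4,5,1] a) [5,1,2,3,4] = c"
  have "ok5 [2,3,4,5,1]" "ok5 [5,1,2,3,4]" by (simp_all add: ok5_def)
  then have "lp [2,3,4,5,1] \<circ> lp a \<circ> lp [5,1,2,3,4] = lp c"
    using a by (simp add: lp_comp ok5_lcomp)
  then show ?thesis using cj2[OF a(1)] by simp
qed
lemma from_d: assumes h21435: "lp [2,1,4,3,5] \<in> N" shows "\<forall>v\<in>set L60. lp v \<in> N"
proof -
  have h12345: "lp [1,2,3,4,5] \<in> N" by (rule mulL[OF h21435 h21435]) (simp_all add: ok5_def lcomp_def)
  have h13254: "lp [1,3,2,5,4] \<in> N" by (rule cj2L[OF h21435]) (simp_all add: ok5_def lcomp_def)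
  have h32154: "lp [3,2,1,5,4] \<in> N" by (rule cj1L[OF h13254]) (simp_all add: ok5_def lcomp_def)
  have h23145: "lp [2,3,1,4,5] \<in> N" by (rule mulL[OF h13254 h32154]) (simp_all add: ok5_def lcomp_def)
  have h24153: "lp [2,4,1,5,3] \<in> N" by (rule mulL[OF h21435 h13254]) (simp_all add: ok5_def lcomp_def)
  have h23451: "lp [2,3,4,5,1] \<in> N" by (rule cj1L[OF h24153]) (simp_all add: ok5_def lcomp_def)
  have h43215: "lp [4,3,2,1,5] \<in> N" by (rule cj1L[OF h21435]) (simp_all add: ok5_def lcomp_def)
  have h34125: "lp [3,4,1,2,5] \<in> N" by (rule mulL[OF h21435 h43215]) (simp_all add: ok5_def lcomp_def)
  have h15432: "lp [1,5,4,3,2] \<in> N" by (rule cj2L[OF h43215]) (simp_all add: ok5_def lcomp_def)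
  have h35214: "lp [3,5,2,1,4] \<in> N" by (rule mulL[OF h34125 h15432]) (simp_all add: ok5_def lcomp_def)
  have h13425: "lp [1,3,4,2,5] \<in> N" by (rule mulL[OF h24153 h35214]) (simp_all add: ok5_def lcomp_def)
  have h24315: "lp [2,4,3,1,5] \<in> N" by (rule mulL[OF h21435 h13425]) (simp_all add: ok5_def lcomp_def)
  have h31245: "lp [3,1,2,4,5] \<in> N" by (rule mulL[OF h43215 h24315]) (simp_all add: ok5_def lcomp_def)
  have h31452: "lp [3,1,4,5,2] \<in> N" by (rule mulL[OF h43215 h24153]) (simp_all add: ok5_def lcomp_def)
  have h45123: "lp [4,5,1,2,3] \<in> N" by (rule mulL[OF h43215 h15432]) (simp_all add: ok5_def lcomp_def)
  have h25341: "lp [2,5,3,4,1] \<in> N" by (rule mulL[OF h34125 h45123]) (simp_all add: ok5_def lcomp_def)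
  have h43152: "lp [4,3,1,5,2] \<in> N" by (rule mulL[OF h24153 h25341]) (simp_all add: ok5_def lcomp_def)
  have h34251: "lp [3,4,2,5,1] \<in> N" by (rule mulL[OF h21435 h43152]) (simp_all add: ok5_def lcomp_def)
  have h52431: "lp [5,2,4,3,1] \<in> N" by (rule cj2L[OF h13254]) (simp_all add: ok5_def lcomp_def)
  have h34512: "lp [3,4,5,1,2] \<in> N" by (rule mulL[OF h24153 h52431]) (simp_all add: ok5_def lcomp_def)
  have h31524: "lp [3,1,5,2,4] \<in> N" by (rule mulL[OF h13254 h21435]) (simp_all add: ok5_def lcomp_def)
  have h13542: "lp [1,3,5,4,2] \<in> N" by (rule mulL[OF h34125 h31524]) (simp_all add: ok5_def lcomp_def)
  have h21354: "lp [2,1,3,5,4] \<in> N" by (rule mulL[OF h24153 h13542]) (simp_all add: ok5_def lcomp_def)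
  have h12453: "lp [1,2,4,5,3] \<in> N" by (rule mulL[OF h21435 h21354]) (simp_all add: ok5_def lcomp_def)
  have h14352: "lp [1,4,3,5,2] \<in> N" by (rule mulL[OF h34125 h32154]) (simp_all add: ok5_def lcomp_def)
  have h14523: "lp [1,4,5,2,3] \<in> N" by (rule mulL[OF h13254 h15432]) (simp_all add: ok5_def lcomp_def)
  have h42351: "lp [4,2,3,5,1] \<in> N" by (rule mulL[OF h43215 h13254]) (simp_all add: ok5_def lcomp_def)
  have h42513: "lp [4,2,5,1,3] \<in> N" by (rule mulL[OF h24153 h21435]) (simp_all add: ok5_def lcomp_def)
  have h25134: "lp [2,5,1,3,4] \<in> N" by (rule mulL[OF h13254 h34125]) (simp_all add: ok5_def lcomp_def)
  have h45312: "lp [4,5,3,1,2] \<in> N" by (rule mulL[OF h34125 h25134]) (simp_all add: ok5_def lcomp_def)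
  have h24531: "lp [2,4,5,3,1] \<in> N" by (rule mulL[OF h21435 h13542]) (simp_all add: ok5_def lcomp_def)
  have h43521: "lp [4,3,5,2,1] \<in> N" by (rule mulL[OF h13254 h52431]) (simp_all add: ok5_def lcomp_def)
  have h45231: "lp [4,5,2,3,1] \<in> N" by (rule mulL[OF h24153 h24153]) (simp_all add: ok5_def lcomp_def)
  have h23514: "lp [2,3,5,1,4] \<in> N" by (rule mulL[OF h24153 h15432]) (simp_all add: ok5_def lcomp_def)
  have h35142: "lp [3,5,1,4,2] \<in> N" by (rule mulL[OF h13254 h24153]) (simp_all add: ok5_def lcomp_def)
  have h15324: "lp [1,5,3,2,4] \<in> N" by (rule mulL[OF h34125 h35142]) (simp_all add: ok5_def lcomp_def)
  have h25413: "lp [2,5,4,1,3] \<in> N" by (rule mulL[OF h21435 h15324]) (simp_all add: ok5_def lcomp_def)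
  have h41325: "lp [4,1,3,2,5] \<in> N" by (rule mulL[OF h34125 h23145]) (simp_all add: ok5_def lcomp_def)
  have h52143: "lp [5,2,1,4,3] \<in> N" by (rule mulL[OF h24153 h41325]) (simp_all add: ok5_def lcomp_def)
  have h53412: "lp [5,3,4,1,2] \<in> N" by (rule mulL[OF h43215 h52143]) (simp_all add: ok5_def lcomp_def)
  have h53124: "lp [5,3,1,2,4] \<in> N" by (rule mulL[OF h24153 h45312]) (simp_all add: ok5_def lcomp_def)
  have h53241: "lp [5,3,2,4,1] \<in> N" by (rule mulL[OF h13254 h42351]) (simp_all add: ok5_def lcomp_def)
  have h51423: "lp [5,1,4,2,3] \<in> N" by (rule mulL[OF h34125 h53241]) (simp_all add: ok5_def lcomp_def)
  have h51234: "lp [5,1,2,3,4] \<in> N" by (rule mulL[OF h21435 h52143]) (simp_all add: ok5_def lcomp_def)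
  have h41253: "lp [4,1,2,5,3] \<in> N" by (rule mulL[OF h24153 h23145]) (simp_all add: ok5_def lcomp_def)
  have h41532: "lp [4,1,5,3,2] \<in> N" by (rule mulL[OF h24153 h23451]) (simp_all add: ok5_def lcomp_def)
  have h54213: "lp [5,4,2,1,3] \<in> N" by (rule mulL[OF h34125 h52431]) (simp_all add: ok5_def lcomp_def)
  have h35421: "lp [3,5,4,2,1] \<in> N" by (rule mulL[OF h24153 h54213]) (simp_all add: ok5_def lcomp_def)
  have h52314: "lp [5,2,3,1,4] \<in> N" by (rule mulL[OF h13254 h43215]) (simp_all add: ok5_def lcomp_def)
  have h54132: "lp [5,4,1,3,2] \<in> N" by (rule mulL[OF h13254 h45123]) (simp_all add: ok5_def lcomp_def)
  have h51342: "lp [5,1,3,4,2] \<in> N" by (rule mulL[OF h24153 h43521]) (simp_all add: ok5_def lcomp_def)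
  have h14235: "lp [1,4,2,3,5] \<in> N" by (rule mulL[OF h24153 h32154]) (simp_all add: ok5_def lcomp_def)
  have h12534: "lp [1,2,5,3,4] \<in> N" by (rule mulL[OF h24153 h31452]) (simp_all add: ok5_def lcomp_def)
  have h15243: "lp [1,5,2,4,3] \<in> N" by (rule mulL[OF h24153 h34125]) (simp_all add: ok5_def lcomp_def)
  have h54321: "lp [5,4,3,2,1] \<in> N" by (rule mulL[OF h43215 h51234]) (simp_all add: ok5_def lcomp_def)
  have h42135: "lp [4,2,1,3,5] \<in> N" by (rule mulL[OF h43215 h13425]) (simp_all add: ok5_def lcomp_def)
  have h21543: "lp [2,1,5,4,3] \<in> N" by (rule mulL[OF h13254 h31452]) (simp_all add: ok5_def lcomp_def)
  have h32541: "lp [3,2,5,4,1] \<in> N" by (rule mulL[OF h34125 h14523]) (simp_all add: ok5_def lcomp_def)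
  have h32415: "lp [3,2,4,1,5] \<in> N" by (rule mulL[OF h21435 h41325]) (simp_all add: ok5_def lcomp_def)
  show ?thesis unfolding L60_def using h12345 h23145 h23451 h31245 h31452 h34251 h34512 h12453 h14352 h14523 h42351 h42513 h45312 h45123 h24153 h24531 h43152 h43521 h45231 h23514 h25413 h25134 h53412 h53124 h51423 h51234 h41253 h41532 h31524 h35421 h35214 h52431 h52314 h35142 h54213 h54132 h51342 h34125 h14235 h12534 h15432 h15324 h15243 h54321 h52143 h24315 h42135 h41325 h13542 h13425 h25341 h53241 h43215 h21543 h21435 h21354 h13254 h32541 h32415 h32154 by simp
qed
end


abbreviation "A5c \<equiv> carrier (alt_group 5)"
abbreviation "A4c \<equiv> carrier (alt_group 4)"
interpretation A5: group "alt_group 5" by (rule alt_group_is_group)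

lemma memg1: "lp a \<in> A5c \<Longrightarrow> ok5 a \<Longrightarrow> lcomp a [2,3,1,4,5] = c \<Longrightarrow> lp c \<in> A5c"
  using A5.m_closed[of "lp a" "lp [2,3,1,4,5]"] g1_in
    lp_comp[of a "[2,3,1,4,5]"] by (simp add: alt_group_mult ok5_def)
lemma memg2: "lp a \<in> A5c \<Longrightarrow> ok5 a \<Longrightarrow> lcomp a [2,3,4,5,1] = c \<Longrightarrow> lp c \<in> A5c"
  using A5.m_closed[of "lp a" "lp [2,3,4,5,1]"] g2_in
    lp_comp[of a "[2,3,4,5,1]"] by (simp add: alt_group_mult ok5_def)
lemma L60_in: "\<forall>a\<in>set L60. lp a \<in> A5c"
proof -
  have m12345: "lp [1,2,3,4,5] \<in> A5c" using lp_id A5.one_closed by (simp add: alt_group_one)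
  have m23145: "lp [2,3,1,4,5] \<in> A5c" by (rule memg1[OF m12345]) (simp_all add: ok5_def lcomp_def)
  have m23451: "lp [2,3,4,5,1] \<in> A5c" by (rule memg2[OF m12345]) (simp_all add: ok5_def lcomp_def)
  have m31245: "lp [3,1,2,4,5] \<in> A5c" by (rule memg1[OF m23145]) (simp_all add: ok5_def lcomp_def)
  have m31452: "lp [3,1,4,5,2] \<in> A5c" by (rule memg2[OF m23145]) (simp_all add: ok5_def lcomp_def)
  have m34251: "lp [3,4,2,5,1] \<in> A5c" by (rule memg1[OF m23451]) (simp_all add: ok5_def lcomp_def)
  have m34512: "lp [3,4,5,1,2] \<in> A5c" by (rule memg2[OF m23451]) (simp_all add: ok5_def lcomp_def)
  have m12453: "lp [1,2,4,5,3] \<in> A5c" by (rule memg2[OF m31245]) (simp_all add: ok5_def lcomp_def)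
  have m14352: "lp [1,4,3,5,2] \<in> A5c" by (rule memg1[OF m31452]) (simp_all add: ok5_def lcomp_def)
  have m14523: "lp [1,4,5,2,3] \<in> A5c" by (rule memg2[OF m31452]) (simp_all add: ok5_def lcomp_def)
  have m42351: "lp [4,2,3,5,1] \<in> A5c" by (rule memg1[OF m34251]) (simp_all add: ok5_def lcomp_def)
  have m42513: "lp [4,2,5,1,3] \<in> A5c" by (rule memg2[OF m34251]) (simp_all add: ok5_def lcomp_def)
  have m45312: "lp [4,5,3,1,2] \<in> A5c" by (rule memg1[OF m34512]) (simp_all add: ok5_def lcomp_def)
  have m45123: "lp [4,5,1,2,3] \<in> A5c" by (rule memg2[OF m34512]) (simp_all add: ok5_def lcomp_def)
  have m24153: "lp [2,4,1,5,3] \<in> A5c" by (rule memg1[OF m12453]) (simp_all add: ok5_def lcomp_def)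
  have m24531: "lp [2,4,5,3,1] \<in> A5c" by (rule memg2[OF m12453]) (simp_all add: ok5_def lcomp_def)
  have m43152: "lp [4,3,1,5,2] \<in> A5c" by (rule memg1[OF m14352]) (simp_all add: ok5_def lcomp_def)
  have m43521: "lp [4,3,5,2,1] \<in> A5c" by (rule memg2[OF m14352]) (simp_all add: ok5_def lcomp_def)
  have m45231: "lp [4,5,2,3,1] \<in> A5c" by (rule memg2[OF m14523]) (simp_all add: ok5_def lcomp_def)
  have m23514: "lp [2,3,5,1,4] \<in> A5c" by (rule memg2[OF m42351]) (simp_all add: ok5_def lcomp_def)
  have m25413: "lp [2,5,4,1,3] \<in> A5c" by (rule memg1[OF m42513]) (simp_all add: ok5_def lcomp_def)
  have m25134: "lp [2,5,1,3,4] \<in> A5c" by (rule memg2[OF m42513]) (simp_all add: ok5_def lcomp_def)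
  have m53412: "lp [5,3,4,1,2] \<in> A5c" by (rule memg1[OF m45312]) (simp_all add: ok5_def lcomp_def)
  have m53124: "lp [5,3,1,2,4] \<in> A5c" by (rule memg2[OF m45312]) (simp_all add: ok5_def lcomp_def)
  have m51423: "lp [5,1,4,2,3] \<in> A5c" by (rule memg1[OF m45123]) (simp_all add: ok5_def lcomp_def)
  have m51234: "lp [5,1,2,3,4] \<in> A5c" by (rule memg2[OF m45123]) (simp_all add: ok5_def lcomp_def)
  have m41253: "lp [4,1,2,5,3] \<in> A5c" by (rule memg1[OF m24153]) (simp_all add: ok5_def lcomp_def)
  have m41532: "lp [4,1,5,3,2] \<in> A5c" by (rule memg2[OF m24153]) (simp_all add: ok5_def lcomp_def)
  have m31524: "lp [3,1,5,2,4] \<in> A5c" by (rule memg2[OF m43152]) (simp_all add: ok5_def lcomp_def)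
  have m35421: "lp [3,5,4,2,1] \<in> A5c" by (rule memg1[OF m43521]) (simp_all add: ok5_def lcomp_def)
  have m35214: "lp [3,5,2,1,4] \<in> A5c" by (rule memg2[OF m43521]) (simp_all add: ok5_def lcomp_def)
  have m52431: "lp [5,2,4,3,1] \<in> A5c" by (rule memg1[OF m45231]) (simp_all add: ok5_def lcomp_def)
  have m52314: "lp [5,2,3,1,4] \<in> A5c" by (rule memg2[OF m45231]) (simp_all add: ok5_def lcomp_def)
  have m35142: "lp [3,5,1,4,2] \<in> A5c" by (rule memg2[OF m23514]) (simp_all add: ok5_def lcomp_def)
  have m54213: "lp [5,4,2,1,3] \<in> A5c" by (rule memg1[OF m25413]) (simp_all add: ok5_def lcomp_def)
  have m54132: "lp [5,4,1,3,2] \<in> A5c" by (rule memg2[OF m25413]) (simp_all add: ok5_def lcomp_def)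
  have m51342: "lp [5,1,3,4,2] \<in> A5c" by (rule memg2[OF m25134]) (simp_all add: ok5_def lcomp_def)
  have m34125: "lp [3,4,1,2,5] \<in> A5c" by (rule memg2[OF m53412]) (simp_all add: ok5_def lcomp_def)
  have m14235: "lp [1,4,2,3,5] \<in> A5c" by (rule memg2[OF m51423]) (simp_all add: ok5_def lcomp_def)
  have m12534: "lp [1,2,5,3,4] \<in> A5c" by (rule memg1[OF m51234]) (simp_all add: ok5_def lcomp_def)
  have m15432: "lp [1,5,4,3,2] \<in> A5c" by (rule memg1[OF m41532]) (simp_all add: ok5_def lcomp_def)
  have m15324: "lp [1,5,3,2,4] \<in> A5c" by (rule memg2[OF m41532]) (simp_all add: ok5_def lcomp_def)
  have m15243: "lp [1,5,2,4,3] \<in> A5c" by (rule memg2[OF m31524]) (simp_all add: ok5_def lcomp_def)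
  have m54321: "lp [5,4,3,2,1] \<in> A5c" by (rule memg1[OF m35421]) (simp_all add: ok5_def lcomp_def)
  have m52143: "lp [5,2,1,4,3] \<in> A5c" by (rule memg2[OF m35214]) (simp_all add: ok5_def lcomp_def)
  have m24315: "lp [2,4,3,1,5] \<in> A5c" by (rule memg2[OF m52431]) (simp_all add: ok5_def lcomp_def)
  have m42135: "lp [4,2,1,3,5] \<in> A5c" by (rule memg2[OF m54213]) (simp_all add: ok5_def lcomp_def)
  have m41325: "lp [4,1,3,2,5] \<in> A5c" by (rule memg2[OF m54132]) (simp_all add: ok5_def lcomp_def)
  have m13542: "lp [1,3,5,4,2] \<in> A5c" by (rule memg1[OF m51342]) (simp_all add: ok5_def lcomp_def)
  have m13425: "lp [1,3,4,2,5] \<in> A5c" by (rule memg2[OF m51342]) (simp_all add: ok5_def lcomp_def)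
  have m25341: "lp [2,5,3,4,1] \<in> A5c" by (rule memg2[OF m12534]) (simp_all add: ok5_def lcomp_def)
  have m53241: "lp [5,3,2,4,1] \<in> A5c" by (rule memg2[OF m15324]) (simp_all add: ok5_def lcomp_def)
  have m43215: "lp [4,3,2,1,5] \<in> A5c" by (rule memg2[OF m54321]) (simp_all add: ok5_def lcomp_def)
  have m21543: "lp [2,1,5,4,3] \<in> A5c" by (rule memg1[OF m52143]) (simp_all add: ok5_def lcomp_def)
  have m21435: "lp [2,1,4,3,5] \<in> A5c" by (rule memg2[OF m52143]) (simp_all add: ok5_def lcomp_def)
  have m21354: "lp [2,1,3,5,4] \<in> A5c" by (rule memg2[OF m42135]) (simp_all add: ok5_def lcomp_def)
  have m13254: "lp [1,3,2,5,4] \<in> A5c" by (rule memg2[OF m41325]) (simp_all add: ok5_def lcomp_def)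
  have m32541: "lp [3,2,5,4,1] \<in> A5c" by (rule memg1[OF m53241]) (simp_all add: ok5_def lcomp_def)
  have m32415: "lp [3,2,4,1,5] \<in> A5c" by (rule memg2[OF m53241]) (simp_all add: ok5_def lcomp_def)
  have m32154: "lp [3,2,1,5,4] \<in> A5c" by (rule memg2[OF m43215]) (simp_all add: ok5_def lcomp_def)
  show ?thesis unfolding L60_def using m12345 m23145 m23451 m31245 m31452 m34251 m34512 m12453 m14352 m14523 m42351 m42513 m45312 m45123 m24153 m24531 m43152 m43521 m45231 m23514 m25413 m25134 m53412 m53124 m51423 m51234 m41253 m41532 m31524 m35421 m35214 m52431 m52314 m35142 m54213 m54132 m51342 m34125 m14235 m12534 m15432 m15324 m15243 m54321 m52143 m24315 m42135 m41325 m13542 m13425 m25341 m53241 m43215 m21543 m21435 m21354 m13254 m32541 m32415 m32154 by simp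
qed

lemma L60_facts: "length L60 = 60" "distinct L60" "list_all ok5 L60"
  by (simp_all add: L60_def ok5_def)

lemma A5c_card: "card A5c = 60"
  using alt_group_card_carrier[of 5] by (simp add: fact_numeral)

lemma lp_inj_on: "inj_on lp {xs. ok5 xs}"
  by (rule inj_onI) (auto simp: ok5_def intro: lp_inj)

lemma finite_A5c: "finite A5c" using A5c_card card.infinite by fastforce

lemma A5c_eq: "A5c = lp ` set L60"
proof -
  have sub: "lp ` set L60 \<subseteq> A5c" using L60_in by auto
  have "inj_on lp (set L60)"
    using L60_facts(3) by (auto simp: list_all_iff intro!: inj_on_subset[OF lp_inj_on])
  then have c: "card (lp ` set L60) = 60" using L60_facts(1,2)
    by (simp add: card_image distinct_card)
  show ?thesis using sub c A5c_card finite_A5c by (metis card_subset_eq)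
qed

lemma lp_apply: "ok5 xs \<Longrightarrow> i \<in> {1..5} \<Longrightarrow> lp xs i = xs ! (i - 1)"
  by (auto simp: lp_def ok5_def)

lemma A4c_eq_stab: "A4c = {p \<in> A5c. p 5 = 5}"
proof safe
  fix p assume p: "p \<in> A4c"
  then have pp: "p permutes {1..4}" "evenperm p" by (auto simp: alt_group_carrier)
  have "p permutes {1..5}" by (rule permutes_subset[OF pp(1)]) auto
  then show "p \<in> A5c" using pp by (simp add: alt_group_carrier)
  show "p 5 = 5" using permutes_not_in[OF pp(1)] by simp
next
  fix p assume p: "p \<in> A5c" "p 5 = 5"
  then have pp: "p permutes {1..5}" "evenperm p" by (auto simp: alt_group_carrier)
  have "p permutes {1..4}"
  proof (rule permutes_superset[OF pp(1)])
    fix x assume "x \<in> {1..5} - {1..4::nat}"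
    then have "x = 5" by auto
    then show "p x = x" using p(2) by simp
  qed
  then show "p \<in> A4c" using pp by (simp add: alt_group_carrier)
qed

lemma L12_eq0: "L12 = filter (\<lambda>xs. xs ! 4 = 5) L60"
  by (simp add: L12_def L60_def)
lemma L12_eq: "set L12 = {xs \<in> set L60. xs ! 4 = 5}"
  by (simp add: L12_eq0)

lemma A4c_eq: "A4c = lp ` set L12"
proof -
  have "\<And>xs. xs \<in> set L60 \<Longrightarrow> lp xs 5 = xs ! 4"
    using L60_facts(3) by (auto simp: list_all_iff lp_apply)
  then show ?thesis unfolding A4c_eq_stab A5c_eq L12_eq by auto
qed

lemma A4c_sub: "A4c \<subseteq> A5c" using A4c_eq_stab by auto

lemma L12_ok: "list_all ok5 L12" by (simp add: L12_def ok5_def)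

lemma lcomp_len: "length (lcomp a b) = length b" by (simp add: lcomp_def)

lemma lp_noncomm: "ok5 a \<Longrightarrow> ok5 b \<Longrightarrow> lcomp a b \<noteq> lcomp b a \<Longrightarrow> lp a \<circ> lp b \<noteq> lp b \<circ> lp a"
  using lp_comp[of a b] lp_comp[of b a] lp_inj[of "lcomp a b" "lcomp b a"]
  by (auto simp: lcomp_len ok5_def)

lemma c1_in4: "lp [2,3,1,4,5] \<in> A4c" by (simp add: A4c_eq L12_def)
lemma c2_in4: "lp [2,1,4,3,5] \<in> A4c" by (simp add: A4c_eq L12_def)

lemma c12_noncomm: "lp [2,1,4,3,5] \<circ> lp [2,3,1,4,5] \<noteq> lp [2,3,1,4,5] \<circ> lp [2,1,4,3,5]"
  by (rule lp_noncomm) (simp_all add: ok5_def lcomp_def)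

lemma A4_center:
  assumes "z \<in> A4c" "\<forall>g\<in>A4c. z \<circ> g = g \<circ> z"
  shows "z = id"
proof -
  obtain xs where xs: "xs \<in> set L12" "z = lp xs" using assms(1) A4c_eq by auto
  have ok: "ok5 xs" using xs(1) L12_ok by (simp add: list_all_iff)
  have "list_all (\<lambda>xs. xs = [1,2,3,4,5] \<or> lcomp xs [2,3,1,4,5] \<noteq> lcomp [2,3,1,4,5] xs \<or> lcomp xs [2,1,4,3,5] \<noteq> lcomp [2,1,4,3,5] xs) L12"
    by (simp add: L12_def lcomp_def)
  then have "xs = [1,2,3,4,5] \<or> lcomp xs [2,3,1,4,5] \<noteq> lcomp [2,3,1,4,5] xs \<or> lcomp xs [2,1,4,3,5] \<noteq> lcomp [2,1,4,3,5] xs"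
    using xs(1) by (simp add: list_all_iff)
  moreover have "z \<circ> lp [2,3,1,4,5] = lp [2,3,1,4,5] \<circ> z" "z \<circ> lp [2,1,4,3,5] = lp [2,1,4,3,5] \<circ> z"
    using assms(2) c1_in4 c2_in4 by auto
  ultimately show ?thesis using lp_noncomm[OF ok, of "[2,3,1,4,5]"] lp_noncomm[OF ok, of "[2,1,4,3,5]"] xs(2) lp_id
    by (auto simp: ok5_def)
qed

lemma lp_mem_A5: "xs \<in> set L60 \<Longrightarrow> lp xs \<in> A5c" using A5c_eq by auto

lemma inv_lp:
  assumes "lp c \<in> A5c" "lp c' \<in> A5c" "ok5 c" "ok5 c'" "lcomp c' c = [1,2,3,4,5]"
  shows "inv\<^bsub>alt_group 5\<^esub> (lp c) = lp c'"
proof -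
  have "lp c' \<otimes>\<^bsub>alt_group 5\<^esub> lp c = \<one>\<^bsub>alt_group 5\<^esub>"
    using assms lp_comp[of c' c] lp_id by (simp add: alt_group_mult alt_group_one)
  then show ?thesis using group.inv_equality[OF alt_group_is_group] assms(1,2) by blast
qed

lemma V_sub4: "lp ` set Vl \<subseteq> A4c" by (auto simp: A4c_eq L12_def Vl_def)

lemma d_in_V: "lp [2,1,4,3,5] \<in> lp ` set Vl" by (simp add: Vl_def)

lemma card_V: "card (lp ` set Vl) = 4"
proof -
  have "inj_on lp (set Vl)" by (rule inj_on_subset[OF lp_inj_on]) (auto simp: Vl_def ok5_def)
  then have "card (lp ` set Vl) = card (set Vl)" by (rule card_image)
  then show ?thesis by (simp add: Vl_def)
qed

lemma V_closed: "x \<in> lp ` set Vl \<Longrightarrow> y \<in> lp ` set Vl \<Longrightarrow> x \<circ> y \<in> lp ` set Vl"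
proof -
  assume "x \<in> lp ` set Vl" "y \<in> lp ` set Vl"
  then obtain a b where ab: "a \<in> set Vl" "b \<in> set Vl" "x = lp a" "y = lp b" by auto
  have "ok5 a" "ok5 b" using ab by (auto simp: Vl_def ok5_def)
  then have "x \<circ> y = lp (lcomp a b)" using ab lp_comp by simp
  moreover have "lcomp a b \<in> set Vl" using ab(1,2) by (auto simp: Vl_def lcomp_def)
  ultimately show ?thesis by simp
qed

lemma V_comm: "x \<in> lp ` set Vl \<Longrightarrow> y \<in> lp ` set Vl \<Longrightarrow> x \<circ> y = y \<circ> x"
proof -
  assume "x \<in> lp ` set Vl" "y \<in> lp ` set Vl"
  then obtain a b where ab: "a \<in> set Vl" "b \<in> set Vl" "x = lp a" "y = lp b" by auto
  have "ok5 a" "ok5 b" using ab by (auto simp: Vl_def ok5_def)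
  then have "x \<circ> y = lp (lcomp a b)" "y \<circ> x = lp (lcomp b a)" using ab lp_comp by simp_all
  moreover have "lcomp a b = lcomp b a" using ab(1,2) by (auto simp: Vl_def lcomp_def)
  ultimately show ?thesis by simp
qed

lemma V_subgroup: "subgroup (lp ` set Vl) (alt_group 5)"
proof (rule group.subgroupI[OF alt_group_is_group])
  show "lp ` set Vl \<subseteq> A5c" using V_sub4 A4c_sub by auto
  show "lp ` set Vl \<noteq> {}" by (simp add: Vl_def)
  fix a assume a: "a \<in> lp ` set Vl"
  then have "a \<otimes>\<^bsub>alt_group 5\<^esub> a = \<one>\<^bsub>alt_group 5\<^esub>"
    by (auto simp: Vl_def alt_group_mult alt_group_one lp_id[symmetric] lp_comp ok5_def lcomp_def)
  moreover have "a \<in> A5c" using a V_sub4 A4c_sub by auto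
  ultimately have "inv\<^bsub>alt_group 5\<^esub> a = a" using group.inv_equality[OF alt_group_is_group] by blast
  then show "inv\<^bsub>alt_group 5\<^esub> a \<in> lp ` set Vl" using a by simp
next
  fix a b assume "a \<in> lp ` set Vl" "b \<in> lp ` set Vl"
  then show "a \<otimes>\<^bsub>alt_group 5\<^esub> b \<in> lp ` set Vl" using V_closed by (simp add: alt_group_mult)
qed



lemma A4_normal_V:
  assumes N4: "N \<subseteq> A4c" and mulN: "\<forall>x\<in>N. \<forall>y\<in>N. x \<circ> y \<in> N"
    and cjN: "\<forall>g\<in>A4c. \<forall>x\<in>N. g \<circ> x \<circ> inv\<^bsub>alt_group 5\<^esub> g \<in> N"
    and n: "n \<in> N" "n \<noteq> id"
  shows "lp ` set Vl \<subseteq> N"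
proof -
  have i1: "inv\<^bsub>alt_group 5\<^esub> (lp [2,3,1,4,5]) = lp [3,1,2,4,5]"
    by (rule inv_lp[OF g1_in lp_mem_A5]) (simp_all add: L60_def ok5_def lcomp_def)
  have i2: "inv\<^bsub>alt_group 5\<^esub> (lp [2,1,4,3,5]) = lp [2,1,4,3,5]"
    by (rule inv_lp[OF lp_mem_A5 lp_mem_A5]) (simp_all add: L60_def ok5_def lcomp_def)
  interpret nclos4 N
  proof
    show "\<And>x y. x \<in> N \<Longrightarrow> y \<in> N \<Longrightarrow> x \<circ> y \<in> N" using mulN by blast
    show "\<And>x. x \<in> N \<Longrightarrow> lp [2,3,1,4,5] \<circ> x \<circ> lp [3,1,2,4,5] \<in> N"
      using cjN c1_in4 i1 by metis
    show "\<And>x. x \<in> N \<Longrightarrow> lp [2,1,4,3,5] \<circ> x \<circ> lp [2,1,4,3,5] \<in> N"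
      using cjN c2_in4 i2 by metis
  qed
  obtain xs where xs: "xs \<in> set L12" "n = lp xs" using n N4 A4c_eq by auto
  have "xs \<noteq> [1,2,3,4,5]" using n(2) xs(2) lp_id by auto
  then have "xs = [2,3,1,4,5] \<or> xs = [3,1,2,4,5] \<or> xs = [3,4,1,2,5] \<or> xs = [1,4,2,3,5] \<or> xs = [2,4,3,1,5] \<or> xs = [4,2,1,3,5] \<or> xs = [4,1,3,2,5] \<or> xs = [1,3,4,2,5] \<or> xs = [4,3,2,1,5] \<or> xs = [2,1,4,3,5] \<or> xs = [3,2,4,1,5]"
    using xs(1) by (simp add: L12_def)
  note dis = this
  have c0: "xs = [2,3,1,4,5] \<Longrightarrow> \<forall>v\<in>set Vl. lp v \<in> N" by (rule from_h23145) (use n(1) xs(2) in simp)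
  have c1: "xs = [3,1,2,4,5] \<Longrightarrow> \<forall>v\<in>set Vl. lp v \<in> N" by (rule from_h31245) (use n(1) xs(2) in simp)
  have c2: "xs = [3,4,1,2,5] \<Longrightarrow> \<forall>v\<in>set Vl. lp v \<in> N" by (rule from_h34125) (use n(1) xs(2) in simp)
  have c3: "xs = [1,4,2,3,5] \<Longrightarrow> \<forall>v\<in>set Vl. lp v \<in> N" by (rule from_h14235) (use n(1) xs(2) in simp)
  have c4: "xs = [2,4,3,1,5] \<Longrightarrow> \<forall>v\<in>set Vl. lp v \<in> N" by (rule from_h24315) (use n(1) xs(2) in simp)
  have c5: "xs = [4,2,1,3,5] \<Longrightarrow> \<forall>v\<in>set Vl. lp v \<in> N" by (rule from_h42135) (use n(1) xs(2) in simp)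
  have c6: "xs = [4,1,3,2,5] \<Longrightarrow> \<forall>v\<in>set Vl. lp v \<in> N" by (rule from_h41325) (use n(1) xs(2) in simp)
  have c7: "xs = [1,3,4,2,5] \<Longrightarrow> \<forall>v\<in>set Vl. lp v \<in> N" by (rule from_h13425) (use n(1) xs(2) in simp)
  have c8: "xs = [4,3,2,1,5] \<Longrightarrow> \<forall>v\<in>set Vl. lp v \<in> N" by (rule from_h43215) (use n(1) xs(2) in simp)
  have c9: "xs = [2,1,4,3,5] \<Longrightarrow> \<forall>v\<in>set Vl. lp v \<in> N" by (rule from_h21435) (use n(1) xs(2) in simp)
  have c10: "xs = [3,2,4,1,5] \<Longrightarrow> \<forall>v\<in>set Vl. lp v \<in> N" by (rule from_h32415) (use n(1) xs(2) in simp)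
  have "\<forall>v\<in>set Vl. lp v \<in> N" using dis
    apply (elim disjE)
    apply (erule c0)
    apply (erule c1)
    apply (erule c2)
    apply (erule c3)
    apply (erule c4)
    apply (erule c5)
    apply (erule c6)
    apply (erule c7)
    apply (erule c8)
    apply (erule c9)
    by (erule c10)
  then show ?thesis by auto
qed
lemma A5_normal_full:
  assumes sg: "subgroup N (alt_group 5)"
    and cjN: "\<forall>g\<in>A5c. \<forall>x\<in>N. g \<circ> x \<circ> inv\<^bsub>alt_group 5\<^esub> g \<in> N"
    and d: "lp [2,1,4,3,5] \<in> N"
  shows "N = A5c"
proof -
  have i1: "inv\<^bsub>alt_group 5\<^esub> (lp [2,3,1,4,5]) = lp [3,1,2,4,5]"
    by (rule inv_lp[OF g1_in lp_mem_A5]) (simp_all add: L60_def ok5_def lcomp_def)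
  have i2: "inv\<^bsub>alt_group 5\<^esub> (lp [2,3,4,5,1]) = lp [5,1,2,3,4]"
    by (rule inv_lp[OF g2_in lp_mem_A5]) (simp_all add: L60_def ok5_def lcomp_def)
  interpret nclos5 N
  proof
    show "\<And>x y. x \<in> N \<Longrightarrow> y \<in> N \<Longrightarrow> x \<circ> y \<in> N"
      using subgroup.m_closed[OF sg] by (simp add: alt_group_mult)
    show "\<And>x. x \<in> N \<Longrightarrow> lp [2,3,1,4,5] \<circ> x \<circ> lp [3,1,2,4,5] \<in> N"
      using cjN g1_in i1 by metis
    show "\<And>x. x \<in> N \<Longrightarrow> lp [2,3,4,5,1] \<circ> x \<circ> lp [5,1,2,3,4] \<in> N"
      using cjN g2_in i2 by metis
  qed
  have "A5c \<subseteq> N" using from_d[OF d] A5c_eq by auto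
  then show ?thesis using subgroup.subset[OF sg] by auto
qed

lemma pres_card_list:
  "list_all (\<lambda>u. list_all (\<lambda>v. u = v \<or> length (filter (\<lambda>xs. (xs!(u-1) = u \<or> xs!(u-1) = v) \<and> (xs!(v-1) = u \<or> xs!(v-1) = v)) L60) \<le> 6) [1,2,3,4,5]) [1,2,3,4,5::nat]"
  by (simp add: L60_def)

lemma pres_card:
  assumes "u \<in> {1..5}" "v \<in> {1..5}" "u \<noteq> v"
  shows "card {p \<in> A5c. p u \<in> {u,v} \<and> p v \<in> {u,v}} \<le> 6"
proof -
  let ?f = "filter (\<lambda>xs. (xs!(u-1) = u \<or> xs!(u-1) = v) \<and> (xs!(v-1) = u \<or> xs!(v-1) = v)) L60"
  have u5: "u \<in> set [1,2,3,4,5]" "v \<in> set [1,2,3,4,5]" using assms by auto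
  have len: "length ?f \<le> 6" using pres_card_list assms(3) u5 by (simp only: list_all_iff) blast
  have "{p \<in> A5c. p u \<in> {u,v} \<and> p v \<in> {u,v}} \<subseteq> lp ` set ?f"
  proof
    fix p assume p: "p \<in> {p \<in> A5c. p u \<in> {u,v} \<and> p v \<in> {u,v}}"
    then obtain xs where xs: "xs \<in> set L60" "p = lp xs" using A5c_eq by auto
    have "ok5 xs" using xs L60_facts(3) by (simp add: list_all_iff)
    then have "p u = xs ! (u - 1)" "p v = xs ! (v-1)" using xs(2) assms lp_apply by auto
    then show "p \<in> lp ` set ?f" using p xs by auto
  qed
  then have "card {p \<in> A5c. p u \<in> {u,v} \<and> p v \<in> {u,v}} \<le> card (lp ` set ?f)"
    by (rule card_mono[rotated]) simp
  also have "\<dots> \<le> length ?f" using card_image_le card_length le_trans by blast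
  finally show ?thesis using len by simp
qed

lemma fix_in_A5c: "i \<in> {1..5} \<Longrightarrow> \<exists>c\<in>A5c. c i = 5"
proof -
  assume i: "i \<in> {1..5::nat}"
  have "list_all (\<lambda>i. list_ex (\<lambda>xs. xs ! (i - 1) = 5) L60) [1,2,3,4,5]"
    by (simp add: L60_def)
  moreover have "i \<in> set [1,2,3,4,5]" using i by auto
  ultimately obtain xs where "xs \<in> set L60" "xs ! (i - 1) = 5"
    by (auto simp: list_all_iff list_ex_iff)
  moreover have "ok5 xs" using calculation L60_facts(3) by (simp add: list_all_iff)
  ultimately have "lp xs \<in> A5c" "lp xs i = 5" using A5c_eq lp_apply[OF _ i] by auto
  then show ?thesis by blast
qed



lemma two_set_false:
  assumes "H \<subseteq> A5c" "card H = 12" "S \<subseteq> {1..5}" "card S = 2"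
    "\<forall>p\<in>H. \<forall>y\<in>S. p y \<in> S"
  shows False
proof -
  obtain u v where uv: "S = {u,v}" "u \<noteq> v" using assms(4) card_2_iff by metis
  have "H \<subseteq> {p \<in> A5c. p u \<in> {u,v} \<and> p v \<in> {u,v}}" using assms(1,5) uv by auto
  then have "card H \<le> card {p \<in> A5c. p u \<in> {u,v} \<and> p v \<in> {u,v}}"
    by (rule card_mono[rotated]) (simp add: finite_A5c)
  also have "\<dots> \<le> 6" using pres_card uv assms(3) by auto
  finally show False using assms(2) by simp
qed

lemma fixpoint_12:
  assumes H: "subgroup H (alt_group 5)" and cH: "card H = 12"
  shows "\<exists>i\<in>{1..5}. \<forall>p\<in>H. p i = i"
proof -
  define E where "E = {1..5::nat}"
  define G' where "G' = (alt_group 5)\<lparr>carrier := H\<rparr>"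
  define \<phi> where "\<phi> = (\<lambda>p::nat\<Rightarrow>nat. restrict p E)"
  have HA: "H \<subseteq> A5c" using subgroup.subset[OF H] .
  have perm: "\<And>p. p \<in> H \<Longrightarrow> p permutes E" using HA by (auto simp: alt_group_carrier E_def)
  have gG': "group G'" unfolding G'_def by (rule subgroup.subgroup_is_group[OF H A5.is_group])
  have hom: "\<phi> \<in> hom G' (BijGroup E)"
  proof (rule homI)
    fix p assume "p \<in> carrier G'"
    then have "p permutes E" using perm by (simp add: G'_def)
    then have "bij_betw p E E" by (rule permutes_imp_bij)
    then have "bij_betw (\<phi> p) E E" unfolding \<phi>_def by (rule bij_betw_cong[THEN iffD1, rotated]) auto
    then show "\<phi> p \<in> carrier (BijGroup E)" by (simp add: BijGroup_def Bij_def \<phi>_def)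
  next
    fix p q assume pq: "p \<in> carrier G'" "q \<in> carrier G'"
    then have pe: "p permutes E" "q permutes E" using perm by (auto simp: G'_def)
    have b: "\<phi> p \<in> Bij E" "\<phi> q \<in> Bij E"
      using pe by (auto simp: Bij_def \<phi>_def intro: bij_betw_cong[THEN iffD1, rotated] permutes_imp_bij)
    have "\<phi> (p \<otimes>\<^bsub>G'\<^esub> q) = restrict (p \<circ> q) E" by (simp add: G'_def alt_group_mult \<phi>_def)
    also have "\<dots> = compose E (\<phi> p) (\<phi> q)"
      using permutes_in_image[OF pe(2)] by (auto simp: compose_def \<phi>_def)
    also have "\<dots> = \<phi> p \<otimes>\<^bsub>BijGroup E\<^esub> \<phi> q" using b by (simp add: BijGroup_def)
    finally show "\<phi> (p \<otimes>\<^bsub>G'\<^esub> q) = \<phi> p \<otimes>\<^bsub>BijGroup E\<^esub> \<phi> q" .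
  qed
  have ga: "group_action G' E \<phi>"
    unfolding group_action_def group_hom_def group_hom_axioms_def
    using gG' group_BijGroup hom by auto
  define Orb where "Orb = {g 1 | g. g \<in> H}"
  have orb: "orbit G' \<phi> 1 = Orb"
    by (auto simp: orbit_def Orb_def G'_def \<phi>_def E_def)
  have "card Orb * card (stabilizer G' \<phi> 1) = 12"
    using group_action.orbit_stabilizer_theorem[OF ga, of 1] orb cH by (simp add: E_def order_def G'_def)
  then have dvd: "card Orb dvd 12" by (metis dvd_triv_left)
  have OE: "Orb \<subseteq> E" using perm permutes_in_image by (fastforce simp: Orb_def E_def)
  have idH: "id \<in> H" using subgroup.one_closed[OF H] by (simp add: alt_group_one)
  have 1: "1 \<in> Orb" unfolding Orb_def using idH by (metis (mono_tags, lifting) id_apply mem_Collect_eq)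
  have fin: "finite Orb" using OE finite_subset by (auto simp: E_def)
  have cardE: "card E = 5" by (simp add: E_def)
  have c5: "card Orb \<le> 5" using card_mono[OF _ OE] cardE by (simp add: E_def)
  have c0: "card Orb \<ge> 1" using 1 fin card_0_eq by fastforce
  have inv_O: "\<forall>p\<in>H. \<forall>y\<in>Orb. p y \<in> Orb"
  proof (intro ballI)
    fix p y assume "p \<in> H" "y \<in> Orb"
    then obtain g where "g \<in> H" "y = g 1" by (auto simp: Orb_def)
    then have "p \<circ> g \<in> H" "p y = (p \<circ> g) 1"
      using subgroup.m_closed[OF H \<open>p \<in> H\<close>] by (auto simp: alt_group_mult)
    then show "p y \<in> Orb" unfolding Orb_def by blast
  qed
  have inv_C: "\<forall>p\<in>H. \<forall>y\<in>E - Orb. p y \<in> E - Orb"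
  proof (intro ballI)
    fix p y assume p: "p \<in> H" and y: "y \<in> E - Orb"
    have "p y \<in> E" using y perm[OF p] permutes_in_image by fastforce
    moreover have "p y \<notin> Orb"
    proof
      assume "p y \<in> Orb"
      have ip: "inv\<^bsub>alt_group 5\<^esub> p \<in> H" using subgroup.m_inv_closed[OF H p] .
      have "inv\<^bsub>alt_group 5\<^esub> p \<otimes>\<^bsub>alt_group 5\<^esub> p = id"
        using A5.l_inv p HA by (auto simp: alt_group_one)
      then have "(inv\<^bsub>alt_group 5\<^esub> p) (p y) = y" by (simp add: alt_group_mult fun_eq_iff)
      moreover have "(inv\<^bsub>alt_group 5\<^esub> p) (p y) \<in> Orb" using inv_O ip \<open>p y \<in> Orb\<close> by blast
      ultimately show False using y by simp
    qed
    ultimately show "p y \<in> E - Orb" by simp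
  qed
  have cC: "card (E - Orb) = 5 - card Orb" using card_Diff_subset[OF fin OE] cardE by simp
  have "card Orb \<in> {1,2,3,4}"
  proof -
    have "card Orb \<noteq> 5" using dvd by auto
    then show ?thesis using c0 c5 by auto
  qed
  then consider "card Orb = 1" | "card Orb = 2" | "card Orb = 3" | "card Orb = 4" by auto
  then show ?thesis
  proof cases
    case 1
    then have "Orb = {1}" using \<open>1 \<in> Orb\<close> by (metis card_1_singletonE singletonD)
    then show ?thesis using inv_O by (auto simp: E_def)
  next
    case 2
    then show ?thesis using two_set_false[OF HA cH, of Orb] OE inv_O by (auto simp: E_def)
  next
    case 3
    then have "card (E - Orb) = 2" using cC by simp
    then show ?thesis using two_set_false[OF HA cH, of "E - Orb"] inv_C by (auto simp: E_def)
  next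
    case 4
    then have "card (E - Orb) = 1" using cC by simp
    then obtain w where w: "E - Orb = {w}" by (metis card_1_singletonE)
    then have "w \<in> E" by auto
    moreover have "\<forall>p\<in>H. p w = w" using inv_C w by auto
    ultimately show ?thesis by (auto simp: E_def)
  qed
qed



context group begin

lemma mid_cancel1 [simp]: "x \<in> carrier G \<Longrightarrow> y \<in> carrier G \<Longrightarrow> x \<otimes> (inv x \<otimes> y) = y"
  by (simp add: m_assoc[symmetric])
lemma mid_cancel2 [simp]: "x \<in> carrier G \<Longrightarrow> y \<in> carrier G \<Longrightarrow> inv x \<otimes> (x \<otimes> y) = y"
  by (simp add: m_assoc[symmetric])

lemma sub_lagrange:
  assumes "subgroup H G" "subgroup S G" "H \<subseteq> S"
  shows "card (rcosets\<^bsub>G\<lparr>carrier := S\<rparr>\<^esub> H) * card H = card S"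
  using group.lagrange[OF subgroup.subgroup_is_group[OF assms(2) is_group] subgroup_incl[OF assms]]
  by (simp add: order_def)

lemma sub_dvd:
  assumes "subgroup H G" "subgroup S G" "H \<subseteq> S"
  shows "card H dvd card S"
  using sub_lagrange[OF assms] by (metis dvd_triv_right)

lemma index2:
  assumes B: "subgroup B G" and E: "subgroup E G" and BE: "B \<subseteq> E" and fE: "finite E"
    and c: "card E = 2 * card B" and x: "x \<in> E" "x \<notin> B"
  shows "(\<lambda>b. b \<otimes> x) ` B = E - B" "(\<lambda>b. x \<otimes> b) ` B = E - B"
proof -
  have xc: "x \<in> carrier G" using x E subgroup.subset by blast
  have Bc: "\<And>b. b \<in> B \<Longrightarrow> b \<in> carrier G" using B subgroup.subset by blast
  have fB: "finite B" using fE BE finite_subset by blast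
  have cD: "card (E - B) = card B" using c card_Diff_subset[OF fB BE] by simp
  have s1: "(\<lambda>b. b \<otimes> x) ` B \<subseteq> E - B"
  proof
    fix y assume "y \<in> (\<lambda>b. b \<otimes> x) ` B"
    then obtain b where b: "b \<in> B" "y = b \<otimes> x" by auto
    have "y \<in> E" using b BE x subgroup.m_closed[OF E] by auto
    moreover have "y \<notin> B"
    proof
      assume "y \<in> B"
      then have "inv b \<otimes> y \<in> B" using b subgroup.m_closed[OF B] subgroup.m_inv_closed[OF B] by auto
      also have "inv b \<otimes> y = x" using b Bc xc by (simp add: m_assoc[symmetric])
      finally show False using x by simp
    qed
    ultimately show "y \<in> E - B" by simp
  qed
  have s2: "(\<lambda>b. x \<otimes> b) ` B \<subseteq> E - B"
  proof
    fix y assume "y \<in> (\<lambda>b. x \<otimes> b) ` B"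
    then obtain b where b: "b \<in> B" "y = x \<otimes> b" by auto
    have "y \<in> E" using b BE x subgroup.m_closed[OF E] by auto
    moreover have "y \<notin> B"
    proof
      assume "y \<in> B"
      then have "y \<otimes> inv b \<in> B" using b subgroup.m_closed[OF B] subgroup.m_inv_closed[OF B] by auto
      also have "y \<otimes> inv b = x" using b Bc xc by (simp add: m_assoc)
      finally show False using x by simp
    qed
    ultimately show "y \<in> E - B" by simp
  qed
  have i1: "inj_on (\<lambda>b. b \<otimes> x) B" using Bc xc by (auto intro!: inj_onI)
  have i2: "inj_on (\<lambda>b. x \<otimes> b) B" using Bc xc by (auto intro!: inj_onI)
  have fD: "finite (E - B)" using fE by simp
  show "(\<lambda>b. b \<otimes> x) ` B = E - B"
    using card_subset_eq[OF fD s1] card_image[OF i1] cD by simp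
  show "(\<lambda>b. x \<otimes> b) ` B = E - B"
    using card_subset_eq[OF fD s2] card_image[OF i2] cD by simp
qed

lemma index2_conj:
  assumes B: "subgroup B G" and E: "subgroup E G" and BE: "B \<subseteq> E" and fE: "finite E"
    and c: "card E = 2 * card B" and x: "x \<in> E" and b: "b \<in> B"
  shows "x \<otimes> b \<otimes> inv x \<in> B"
proof (cases "x \<in> B")
  case True then show ?thesis
    using b subgroup.m_closed[OF B] subgroup.m_inv_closed[OF B] by auto
next
  case False
  have "x \<otimes> b \<in> E - B" using index2(2)[OF assms(1-6) False] b by blast
  then obtain b' where b': "b' \<in> B" "x \<otimes> b = b' \<otimes> x" using index2(1)[OF assms(1-6) False] by auto
  have xc: "x \<in> carrier G" using x E subgroup.subset by blast
  have "x \<otimes> b \<otimes> inv x = b'" using b' xc B subgroup.subset[OF B] by (auto simp: m_assoc)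
  then show ?thesis using b' by simp
qed

end


locale amal = group G for G (structure) +
  fixes L E :: "'a set"
  assumes sL: "subgroup L G" and sE: "subgroup E G" and fL: "finite L" and fE: "finite E"
    and i5: "sub_index G L (L \<inter> E) = 5" and i2: "sub_index G E (L \<inter> E) = 2"
    and h1: "Gxy1 G L E = {\<one>}" and h2: "Gx1 G L E \<noteq> {\<one>}"
begin

abbreviation "B \<equiv> L \<inter> E"
abbreviation "K \<equiv> Gx1 G L E"
abbreviation "M \<equiv> Gy1 G L E"
abbreviation "t \<equiv> flip_elt G L E"

lemma sB: "subgroup B G" using subgroups_Inter_pair sL sE by blast

lemma Lc: "L \<subseteq> carrier G" using sL subgroup.subset by blast
lemma Ec: "E \<subseteq> carrier G" using sE subgroup.subset by blast

lemma cardL: "card L = 5 * card B"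
  using sub_lagrange[OF sB sL] i5 by (simp add: sub_index_def)
lemma cardE: "card E = 2 * card B"
  using sub_lagrange[OF sB sE] i2 by (simp add: sub_index_def)

lemma cardB_pos: "card B > 0"
  using cardL fL sL subgroup.one_closed sB by (metis card_gt_0_iff empty_iff finite_Int)

lemma t_props: "t \<in> E" "t \<notin> L"
proof -
  have "\<exists>x. x \<in> E \<and> x \<notin> L"
  proof (rule ccontr)
    assume "\<not> ?thesis"
    then have "E \<subseteq> B" by auto
    then have "card E \<le> card B" using card_mono fE finite_Int by (metis card_mono finite_Int)
    then show False using cardE cardB_pos by simp
  qed
  then have "t \<in> E \<and> t \<notin> L" unfolding flip_elt_def by (rule someI_ex)
  then show "t \<in> E" "t \<notin> L" by auto
qed

lemma tc: "t \<in> carrier G" using t_props Ec by auto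

lemma BE: "B \<subseteq> E" by auto

lemma conjB: "b \<in> B \<Longrightarrow> t \<otimes> b \<otimes> inv t \<in> B"
  by (rule index2_conj[OF sB sE BE fE cardE t_props(1)])

lemma conjB': "b \<in> B \<Longrightarrow> inv t \<otimes> b \<otimes> t \<in> B"
proof -
  assume b: "b \<in> B"
  have "inv t \<in> E" using subgroup.m_inv_closed[OF sE t_props(1)] .
  then have "inv t \<otimes> b \<otimes> inv (inv t) \<in> B" using index2_conj[OF sB sE BE fE cardE] b by blast
  then show ?thesis using tc by simp
qed

lemma Bc: "B \<subseteq> carrier G" using Lc by auto

lemma K_def': "K = {g \<in> L. \<forall>h\<in>L. inv h \<otimes> g \<otimes> h \<in> B}"
  by (simp add: Gx1_def kernel1_def)

lemma K_sub_B: "K \<subseteq> B"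
proof
  fix g assume "g \<in> K"
  then have "g \<in> L" "inv \<one> \<otimes> g \<otimes> \<one> \<in> B" using subgroup.one_closed[OF sL] by (auto simp: K_def')
  then show "g \<in> B" using Lc by auto
qed

lemma Kc: "K \<subseteq> carrier G" using K_sub_B Bc by auto

lemma sK: "subgroup K G"
proof (rule subgroupI)
  show "K \<subseteq> carrier G" by (rule Kc)
  show "K \<noteq> {}"
  proof -
    have "\<one> \<in> K" using subgroup.one_closed[OF sL] subgroup.one_closed[OF sB] Lc
      by (auto simp: K_def')
    then show ?thesis by auto
  qed
next
  fix a assume a: "a \<in> K"
  then have aL: "a \<in> L" and ac: "a \<in> carrier G" using Kc by (auto simp: K_def')
  show "inv a \<in> K" unfolding K_def'
  proof (intro CollectI conjI ballI)
    show "inv a \<in> L" using subgroup.m_inv_closed[OF sL aL] .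
    fix h assume h: "h \<in> L"
    then have hc: "h \<in> carrier G" using Lc by auto
    have "inv h \<otimes> a \<otimes> h \<in> B" using a h by (auto simp: K_def')
    then have "inv (inv h \<otimes> a \<otimes> h) \<in> B" by (rule subgroup.m_inv_closed[OF sB])
    also have "inv (inv h \<otimes> a \<otimes> h) = inv h \<otimes> inv a \<otimes> h" using hc ac by (simp add: inv_mult_group m_assoc)
    finally show "inv h \<otimes> inv a \<otimes> h \<in> B" .
  qed
next
  fix a b assume a: "a \<in> K" and b: "b \<in> K"
  then have aL: "a \<in> L" "b \<in> L" and ac: "a \<in> carrier G" "b \<in> carrier G" using Kc by (auto simp: K_def')
  show "a \<otimes> b \<in> K" unfolding K_def'
  proof (intro CollectI conjI ballI)
    show "a \<otimes> b \<in> L" using subgroup.m_closed[OF sL aL] .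
    fix h assume h: "h \<in> L"
    then have hc: "h \<in> carrier G" using Lc by auto
    have "inv h \<otimes> a \<otimes> h \<in> B" "inv h \<otimes> b \<otimes> h \<in> B" using a b h by (auto simp: K_def')
    then have "(inv h \<otimes> a \<otimes> h) \<otimes> (inv h \<otimes> b \<otimes> h) \<in> B" by (rule subgroup.m_closed[OF sB])
    also have "(inv h \<otimes> a \<otimes> h) \<otimes> (inv h \<otimes> b \<otimes> h) = inv h \<otimes> (a \<otimes> b) \<otimes> h"
      using hc ac by (simp add: m_assoc)
    finally show "inv h \<otimes> (a \<otimes> b) \<otimes> h \<in> B" .
  qed
qed

lemma K_normal: "g \<in> L \<Longrightarrow> k \<in> K \<Longrightarrow> g \<otimes> k \<otimes> inv g \<in> K"
proof -
  assume g: "g \<in> L" and k: "k \<in> K"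
  then have gc: "g \<in> carrier G" and kc: "k \<in> carrier G" and kL: "k \<in> L" using Lc Kc by (auto simp: K_def')
  show ?thesis unfolding K_def'
  proof (intro CollectI conjI ballI)
    show "g \<otimes> k \<otimes> inv g \<in> L" using subgroup.m_closed[OF sL subgroup.m_closed[OF sL g kL] subgroup.m_inv_closed[OF sL g]] .
    fix h assume h: "h \<in> L"
    then have hc: "h \<in> carrier G" using Lc by auto
    have "inv g \<otimes> h \<in> L" using subgroup.m_closed[OF sL subgroup.m_inv_closed[OF sL g] h] .
    then have "inv (inv g \<otimes> h) \<otimes> k \<otimes> (inv g \<otimes> h) \<in> B" using k by (auto simp: K_def')
    also have "inv (inv g \<otimes> h) \<otimes> k \<otimes> (inv g \<otimes> h) = inv h \<otimes> (g \<otimes> k \<otimes> inv g) \<otimes> h"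
      using hc gc kc by (simp add: inv_mult_group m_assoc)
    finally show "inv h \<otimes> (g \<otimes> k \<otimes> inv g) \<otimes> h \<in> B" .
  qed
qed

lemma K_normal': "g \<in> L \<Longrightarrow> k \<in> K \<Longrightarrow> inv g \<otimes> k \<otimes> g \<in> K"
proof -
  assume g: "g \<in> L" and k: "k \<in> K"
  have "inv g \<otimes> k \<otimes> inv (inv g) \<in> K" by (rule K_normal[OF subgroup.m_inv_closed[OF sL g] k])
  then show ?thesis using g Lc by auto
qed

lemma stab_y_eq: "stab_y G L E = (\<lambda>g. t \<otimes> g \<otimes> inv t) ` L"
  by (simp add: stab_y_def)

lemma M_eq: "M = (\<lambda>k. t \<otimes> k \<otimes> inv t) ` K"
proof
  show "M \<subseteq> (\<lambda>k. t \<otimes> k \<otimes> inv t) ` K"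
  proof
    fix y assume y: "y \<in> M"
    then obtain g where g: "g \<in> L" "y = t \<otimes> g \<otimes> inv t"
      by (auto simp: Gy1_def kernel1_def stab_y_eq)
    have gc: "g \<in> carrier G" using g Lc by auto
    have "g \<in> K" unfolding K_def'
    proof (intro CollectI conjI ballI)
      show "g \<in> L" by fact
      fix h assume h: "h \<in> L"
      then have hc: "h \<in> carrier G" using Lc by auto
      have "t \<otimes> h \<otimes> inv t \<in> stab_y G L E" using h by (auto simp: stab_y_eq)
      then have "inv (t \<otimes> h \<otimes> inv t) \<otimes> y \<otimes> (t \<otimes> h \<otimes> inv t) \<in> B"
        using y by (auto simp: Gy1_def kernel1_def)
      also have "inv (t \<otimes> h \<otimes> inv t) \<otimes> y \<otimes> (t \<otimes> h \<otimes> inv t) = t \<otimes> (inv h \<otimes> g \<otimes> h) \<otimes> inv t"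
        using g(2) hc gc tc by (simp add: inv_mult_group m_assoc)
      finally have "t \<otimes> (inv h \<otimes> g \<otimes> h) \<otimes> inv t \<in> B" .
      then have "inv t \<otimes> (t \<otimes> (inv h \<otimes> g \<otimes> h) \<otimes> inv t) \<otimes> t \<in> B" by (rule conjB')
      also have "inv t \<otimes> (t \<otimes> (inv h \<otimes> g \<otimes> h) \<otimes> inv t) \<otimes> t = inv h \<otimes> g \<otimes> h"
        using hc gc tc by (simp add: m_assoc)
      finally show "inv h \<otimes> g \<otimes> h \<in> B" .
    qed
    then show "y \<in> (\<lambda>k. t \<otimes> k \<otimes> inv t) ` K" using g by auto
  qed
next
  show "(\<lambda>k. t \<otimes> k \<otimes> inv t) ` K \<subseteq> M"
  proof
    fix y assume "y \<in> (\<lambda>k. t \<otimes> k \<otimes> inv t) ` K"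
    then obtain k where k: "k \<in> K" "y = t \<otimes> k \<otimes> inv t" by auto
    then have kL: "k \<in> L" and kc: "k \<in> carrier G" using Kc by (auto simp: K_def')
    have "y \<in> stab_y G L E" using k kL by (auto simp: stab_y_eq)
    moreover have "\<forall>h\<in>stab_y G L E. inv h \<otimes> y \<otimes> h \<in> B"
    proof
      fix h assume "h \<in> stab_y G L E"
      then obtain l where l: "l \<in> L" "h = t \<otimes> l \<otimes> inv t" by (auto simp: stab_y_eq)
      then have lc: "l \<in> carrier G" using Lc by auto
      have "inv l \<otimes> k \<otimes> l \<in> B" using k l by (auto simp: K_def')
      then have "t \<otimes> (inv l \<otimes> k \<otimes> l) \<otimes> inv t \<in> B" by (rule conjB)
      also have "t \<otimes> (inv l \<otimes> k \<otimes> l) \<otimes> inv t = inv h \<otimes> y \<otimes> h"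
        using l(2) k(2) lc kc tc by (simp add: inv_mult_group m_assoc)
      finally show "inv h \<otimes> y \<otimes> h \<in> B" .
    qed
    ultimately show "y \<in> M" by (simp add: Gy1_def kernel1_def)
  qed
qed

end


context amal begin

lemma K_sub_L: "K \<subseteq> L" using K_sub_B by auto

lemma M_sub_B: "M \<subseteq> B"
  using M_eq K_sub_B conjB by auto

lemma Mc: "M \<subseteq> carrier G" using M_sub_B Bc by auto

lemma KM_inter: "K \<inter> M = {\<one>}" using h1 by (simp add: Gxy1_def)

lemma sM: "subgroup M G"
proof (rule subgroupI)
  show "M \<subseteq> carrier G" by (rule Mc)
  show "M \<noteq> {}" using M_eq subgroup.one_closed[OF sK] by auto
next
  fix a assume "a \<in> M"
  then obtain k where k: "k \<in> K" "a = t \<otimes> k \<otimes> inv t" using M_eq by auto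
  have kc: "k \<in> carrier G" using k Kc by auto
  have "inv a = t \<otimes> inv k \<otimes> inv t" using k(2) kc tc by (simp add: inv_mult_group m_assoc)
  then show "inv a \<in> M" using M_eq subgroup.m_inv_closed[OF sK k(1)] by auto
next
  fix a b assume "a \<in> M" "b \<in> M"
  then obtain k l where k: "k \<in> K" "a = t \<otimes> k \<otimes> inv t" "l \<in> K" "b = t \<otimes> l \<otimes> inv t" using M_eq by auto
  have kc: "k \<in> carrier G" "l \<in> carrier G" using k Kc by auto
  have "a \<otimes> b = t \<otimes> (k \<otimes> l) \<otimes> inv t" using k kc tc by (simp add: m_assoc)
  then show "a \<otimes> b \<in> M" using M_eq subgroup.m_closed[OF sK k(1) k(3)] by auto
qed

lemma M_normal_B: "b \<in> B \<Longrightarrow> m \<in> M \<Longrightarrow> b \<otimes> m \<otimes> inv b \<in> M"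
proof -
  assume b: "b \<in> B" and m: "m \<in> M"
  then obtain k where k: "k \<in> K" "m = t \<otimes> k \<otimes> inv t" using M_eq by auto
  have bc: "b \<in> carrier G" and kc: "k \<in> carrier G" using b k Bc Kc by auto
  have b': "inv t \<otimes> b \<otimes> t \<in> B" using conjB' b .
  then have "(inv t \<otimes> b \<otimes> t) \<otimes> k \<otimes> inv (inv t \<otimes> b \<otimes> t) \<in> K"
    using K_normal k(1) by auto
  moreover have "b \<otimes> m \<otimes> inv b = t \<otimes> ((inv t \<otimes> b \<otimes> t) \<otimes> k \<otimes> inv (inv t \<otimes> b \<otimes> t)) \<otimes> inv t"
    using k(2) bc kc tc by (simp add: inv_mult_group m_assoc)
  ultimately show ?thesis using M_eq by auto
qed

lemma KM_comm: "k \<in> K \<Longrightarrow> m \<in> M \<Longrightarrow> k \<otimes> m = m \<otimes> k"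
proof -
  assume k: "k \<in> K" and m: "m \<in> M"
  have kc: "k \<in> carrier G" and mc: "m \<in> carrier G" using k m Kc Mc by auto
  have kB: "k \<in> B" and mB: "m \<in> B" using k m K_sub_B M_sub_B by auto
  have "m \<otimes> inv k \<otimes> inv m \<in> K"
    using K_normal[OF _ subgroup.m_inv_closed[OF sK k]] mB by auto
  then have 1: "k \<otimes> (m \<otimes> inv k \<otimes> inv m) \<in> K" using subgroup.m_closed[OF sK k] by blast
  have "k \<otimes> m \<otimes> inv k \<in> M" using M_normal_B[OF kB m] .
  then have 2: "k \<otimes> m \<otimes> inv k \<otimes> inv m \<in> M" using subgroup.m_closed[OF sM _ subgroup.m_inv_closed[OF sM m]] by blast
  have "k \<otimes> m \<otimes> inv k \<otimes> inv m = k \<otimes> (m \<otimes> inv k \<otimes> inv m)" using kc mc by (simp add: m_assoc)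
  then have "k \<otimes> m \<otimes> inv k \<otimes> inv m = \<one>" using 1 2 KM_inter by auto
  then have "k \<otimes> m \<otimes> inv k \<otimes> inv m \<otimes> m \<otimes> k = m \<otimes> k" using kc mc by simp
  then show ?thesis using kc mc by (simp add: m_assoc)
qed

lemma conj_inj: "inj_on (\<lambda>k. t \<otimes> k \<otimes> inv t) (carrier G)"
  by (rule inj_onI) (use tc in \<open>simp add: m_assoc\<close>)

lemma card_M: "card M = card K"
  unfolding M_eq by (rule card_image[OF inj_on_subset[OF conj_inj Kc]])

lemma finK: "finite K" using K_sub_L fL finite_subset by blast

lemma tt_B: "t \<otimes> t \<in> B"
proof (rule ccontr)
  assume nb: "t \<otimes> t \<notin> B"
  have "t \<otimes> t \<in> E" using subgroup.m_closed[OF sE t_props(1) t_props(1)] .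
  then have "t \<otimes> t \<in> (\<lambda>b. b \<otimes> t) ` B"
    using index2(1)[OF sB sE BE fE cardE t_props(1)] nb t_props by auto
  then obtain b where b: "b \<in> B" "t \<otimes> t = b \<otimes> t" by auto
  then have "t = b" using tc Bc by auto
  then show False using b t_props by auto
qed

lemma conj_t_M: "m \<in> M \<Longrightarrow> t \<otimes> m \<otimes> inv t \<in> K"
proof -
  assume "m \<in> M"
  then obtain k where k: "k \<in> K" "m = t \<otimes> k \<otimes> inv t" using M_eq by auto
  have kc: "k \<in> carrier G" using k Kc by auto
  have "(t \<otimes> t) \<otimes> k \<otimes> inv (t \<otimes> t) \<in> K" using K_normal[OF _ k(1)] tt_B by auto
  also have "(t \<otimes> t) \<otimes> k \<otimes> inv (t \<otimes> t) = t \<otimes> m \<otimes> inv t" using k(2) kc tc by (simp add: m_assoc inv_mult_group)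
  finally show ?thesis .
qed

lemma KM_unique: "k1 \<in> K \<Longrightarrow> k2 \<in> K \<Longrightarrow> m1 \<in> M \<Longrightarrow> m2 \<in> M \<Longrightarrow> k1 \<otimes> m1 = k2 \<otimes> m2 \<Longrightarrow> k1 = k2 \<and> m1 = m2"
proof -
  assume a: "k1 \<in> K" "k2 \<in> K" "m1 \<in> M" "m2 \<in> M" "k1 \<otimes> m1 = k2 \<otimes> m2"
  have c: "k1 \<in> carrier G" "k2 \<in> carrier G" "m1 \<in> carrier G" "m2 \<in> carrier G" using a Kc Mc by auto
  have "inv k2 \<otimes> k1 = m2 \<otimes> inv m1"
  proof -
    have "inv k2 \<otimes> (k1 \<otimes> m1) \<otimes> inv m1 = inv k2 \<otimes> (k2 \<otimes> m2) \<otimes> inv m1" using a(5) by simp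
    then show ?thesis using c by (simp add: m_assoc)
  qed
  moreover have "inv k2 \<otimes> k1 \<in> K" using subgroup.m_closed[OF sK subgroup.m_inv_closed[OF sK a(2)] a(1)] .
  moreover have "m2 \<otimes> inv m1 \<in> M" using subgroup.m_closed[OF sM a(4) subgroup.m_inv_closed[OF sM a(3)]] .
  ultimately have "inv k2 \<otimes> k1 = \<one>" "m2 \<otimes> inv m1 = \<one>" using KM_inter by auto
  then show ?thesis using c by (metis inv_closed inv_inv l_inv_ex inv_equality r_inv)
qed

end


locale amal_psi = amal +
  fixes \<psi> :: "'a \<Rightarrow> nat \<Rightarrow> nat"
  assumes psi_mem: "g \<in> L \<Longrightarrow> \<psi> g \<in> A5c"
    and psi_mult: "x \<in> L \<Longrightarrow> y \<in> L \<Longrightarrow> \<psi> (x \<otimes> y) = \<psi> x \<circ> \<psi> y"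
    and psi_onto: "\<psi> ` L = A5c"
    and psi_ker: "g \<in> L \<Longrightarrow> \<psi> g = id \<longleftrightarrow> g \<in> K"
begin

lemma oneL: "\<one> \<in> L" using subgroup.one_closed[OF sL] .

lemma psi_one: "\<psi> \<one> = id"
  using psi_ker oneL subgroup.one_closed[OF sK] by simp

lemma psi_mult': "x \<in> L \<Longrightarrow> y \<in> L \<Longrightarrow> \<psi> (x \<otimes> y) = \<psi> x \<otimes>\<^bsub>alt_group 5\<^esub> \<psi> y"
  using psi_mult by (simp add: alt_group_mult)

lemma psi_inv: "g \<in> L \<Longrightarrow> \<psi> (inv g) = inv\<^bsub>alt_group 5\<^esub> (\<psi> g)"
proof -
  assume g: "g \<in> L"
  have ig: "inv g \<in> L" using subgroup.m_inv_closed[OF sL g] .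
  have "\<psi> (inv g) \<otimes>\<^bsub>alt_group 5\<^esub> \<psi> g = \<psi> (inv g \<otimes> g)" using psi_mult'[OF ig g] by simp
  also have "inv g \<otimes> g = \<one>" using g Lc by auto
  then have "\<psi> (inv g \<otimes> g) = \<one>\<^bsub>alt_group 5\<^esub>" using psi_one by (simp add: alt_group_one)
  finally show ?thesis using A5.inv_equality psi_mem g ig by metis
qed

lemma psi_eq: "g \<in> L \<Longrightarrow> h \<in> L \<Longrightarrow> \<psi> g = \<psi> h \<Longrightarrow> g \<otimes> inv h \<in> K"
proof -
  assume g: "g \<in> L" and h: "h \<in> L" and e: "\<psi> g = \<psi> h"
  have ih: "inv h \<in> L" using subgroup.m_inv_closed[OF sL h] .
  have "\<psi> (g \<otimes> inv h) = \<psi> h \<otimes>\<^bsub>alt_group 5\<^esub> inv\<^bsub>alt_group 5\<^esub> (\<psi> h)"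
    using psi_mult'[OF g ih] psi_inv[OF h] e by simp
  also have "\<dots> = id" using A5.r_inv psi_mem[OF h] by (simp add: alt_group_one)
  finally show ?thesis using psi_ker subgroup.m_closed[OF sL g ih] by blast
qed

lemma psi_conj: "g \<in> L \<Longrightarrow> x \<in> L \<Longrightarrow> \<psi> (g \<otimes> x \<otimes> inv g) = \<psi> g \<circ> \<psi> x \<circ> inv\<^bsub>alt_group 5\<^esub> (\<psi> g)"
proof -
  assume g: "g \<in> L" and x: "x \<in> L"
  have ig: "inv g \<in> L" using subgroup.m_inv_closed[OF sL g] .
  have gx: "g \<otimes> x \<in> L" using subgroup.m_closed[OF sL g x] .
  show ?thesis using psi_mult[OF gx ig] psi_mult[OF g x] psi_inv[OF g] by simp
qed

lemma card_img:
  assumes XL: "X \<subseteq> L" and cl: "\<forall>x\<in>X. \<forall>k\<in>K. k \<otimes> x \<in> X"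
  shows "card X = card (\<psi> ` X) * card K"
proof -
  define F where "F = (\<lambda>p. {x \<in> X. \<psi> x = p})"
  have XU: "X = (\<Union>p\<in>\<psi> ` X. F p)" by (auto simp: F_def)
  have fX: "finite X" using XL fL finite_subset by blast
  have Fp: "\<And>x0. x0 \<in> X \<Longrightarrow> F (\<psi> x0) = (\<lambda>k. k \<otimes> x0) ` K"
  proof
    fix x0 assume x0: "x0 \<in> X"
    then have x0L: "x0 \<in> L" and x0c: "x0 \<in> carrier G" using XL Lc by auto
    show "F (\<psi> x0) \<subseteq> (\<lambda>k. k \<otimes> x0) ` K"
    proof
      fix x assume "x \<in> F (\<psi> x0)"
      then have x: "x \<in> X" "\<psi> x = \<psi> x0" by (auto simp: F_def)
      then have xc: "x \<in> carrier G" using XL Lc by auto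
      have "x \<otimes> inv x0 \<in> K" using psi_eq x XL x0L by auto
      moreover have "x = (x \<otimes> inv x0) \<otimes> x0" using xc x0c by (simp add: m_assoc)
      ultimately show "x \<in> (\<lambda>k. k \<otimes> x0) ` K" by blast
    qed
    show "(\<lambda>k. k \<otimes> x0) ` K \<subseteq> F (\<psi> x0)"
    proof
      fix x assume "x \<in> (\<lambda>k. k \<otimes> x0) ` K"
      then obtain k where k: "k \<in> K" "x = k \<otimes> x0" by auto
      have "\<psi> x = \<psi> k \<circ> \<psi> x0" using psi_mult k x0L K_sub_L by auto
      moreover have "\<psi> k = id" using psi_ker k(1) K_sub_L by auto
      ultimately have "\<psi> x = \<psi> x0" by simp
      moreover have "x \<in> X" using cl k x0 by auto
      ultimately show "x \<in> F (\<psi> x0)" by (simp add: F_def)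
    qed
  qed
  have cF: "\<And>p. p \<in> \<psi> ` X \<Longrightarrow> card (F p) = card K"
  proof -
    fix p assume "p \<in> \<psi> ` X"
    then obtain x0 where x0: "x0 \<in> X" "p = \<psi> x0" by auto
    have x0c: "x0 \<in> carrier G" using x0 XL Lc by auto
    have "inj_on (\<lambda>k. k \<otimes> x0) K" by (intro inj_onI) (metis Kc x0c right_cancel subsetD)
    then show "card (F p) = card K" using Fp[OF x0(1)] x0(2) card_image by metis
  qed
  have "card X = (\<Sum>p\<in>\<psi> ` X. card (F p))"
    apply (subst XU)
    apply (rule card_UN_disjoint)
    using fX by (auto simp: F_def)
  also have "\<dots> = card (\<psi> ` X) * card K" using cF by simp
  finally show ?thesis .
qed

lemma psi_sub: "subgroup X G \<Longrightarrow> X \<subseteq> L \<Longrightarrow> subgroup (\<psi> ` X) (alt_group 5)"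
proof -
  assume sX: "subgroup X G" and XL: "X \<subseteq> L"
  show ?thesis
  proof (rule A5.subgroupI)
    show "\<psi> ` X \<subseteq> A5c" using psi_mem XL by auto
    show "\<psi> ` X \<noteq> {}" using subgroup.one_closed[OF sX] by auto
  next
    fix a assume "a \<in> \<psi> ` X"
    then obtain x where x: "x \<in> X" "a = \<psi> x" by auto
    have "inv\<^bsub>alt_group 5\<^esub> a = \<psi> (inv x)" using psi_inv x XL by auto
    then show "inv\<^bsub>alt_group 5\<^esub> a \<in> \<psi> ` X" using subgroup.m_inv_closed[OF sX x(1)] by auto
  next
    fix a b assume "a \<in> \<psi> ` X" "b \<in> \<psi> ` X"
    then obtain x y where xy: "x \<in> X" "a = \<psi> x" "y \<in> X" "b = \<psi> y" by auto
    have "a \<otimes>\<^bsub>alt_group 5\<^esub> b = \<psi> (x \<otimes> y)" using psi_mult' xy XL by (metis subsetD)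
    then show "a \<otimes>\<^bsub>alt_group 5\<^esub> b \<in> \<psi> ` X" using subgroup.m_closed[OF sX xy(1) xy(3)] by auto
  qed
qed

lemma psi_inj_M: "inj_on \<psi> M"
proof (rule inj_onI)
  fix x y assume xy: "x \<in> M" "y \<in> M" "\<psi> x = \<psi> y"
  have xL: "x \<in> L" "y \<in> L" using xy M_sub_B by auto
  have "x \<otimes> inv y \<in> K" using psi_eq xL xy(3) by auto
  moreover have "x \<otimes> inv y \<in> M" using subgroup.m_closed[OF sM xy(1) subgroup.m_inv_closed[OF sM xy(2)]] .
  ultimately have "x \<otimes> inv y = \<one>" using KM_inter by auto
  then show "x = y" using xy Mc by (metis inv_closed inv_equality inv_inv subsetD r_inv)
qed

lemma card_psi_M: "card (\<psi> ` M) = card K"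
  using card_image[OF psi_inj_M] card_M by simp

lemma card_B: "card B = card (\<psi> ` B) * card K"
proof (rule card_img)
  show "B \<subseteq> L" by auto
  show "\<forall>x\<in>B. \<forall>k\<in>K. k \<otimes> x \<in> B" using subgroup.m_closed[OF sB] K_sub_B by blast
qed

lemma card_L: "card L = 60 * card K"
proof -
  have "card L = card (\<psi> ` L) * card K"
    by (rule card_img) (use subgroup.m_closed[OF sL] K_sub_L in blast)+
  then show ?thesis using psi_onto A5c_card by simp
qed

lemma card_psi_B: "card (\<psi> ` B) = 12"
proof -
  have "card K > 0" using finK subgroup.one_closed[OF sK] card_gt_0_iff by blast
  moreover have "card L = 5 * card B" by (rule cardL)
  ultimately show ?thesis using card_L card_B by simp
qed

end


context amal begin

lemma exists_psi:
  assumes hA: "G\<lparr>carrier := L\<rparr> Mod K \<cong> alt_group 5"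
  shows "\<exists>\<psi>. amal_psi G L E \<psi>"
proof -
  define L' where "L' = G\<lparr>carrier := L\<rparr>"
  obtain \<phi> where phi: "\<phi> \<in> iso (L' Mod K) (alt_group 5)" using hA unfolding is_iso_def L'_def by auto
  have gL': "group L'" unfolding L'_def by (rule subgroup.subgroup_is_group[OF sL is_group])
  have sKL: "subgroup K L'" unfolding L'_def by (rule subgroup_incl[OF sK sL K_sub_L])
  have nK: "K \<lhd> L'"
  proof -
    have "\<forall>x\<in>carrier L'. \<forall>h\<in>K. x \<otimes>\<^bsub>L'\<^esub> h \<otimes>\<^bsub>L'\<^esub> inv\<^bsub>L'\<^esub> x \<in> K"
      using K_normal m_inv_consistent[OF sL] by (simp add: L'_def)
    then show ?thesis using group.normal_inv_iff[OF gL'] sKL by blast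
  qed
  have gM: "group (L' Mod K)" using normal.factorgroup_is_group[OF nK] .
  have ghom: "group_hom (L' Mod K) (alt_group 5) \<phi>"
    using gM alt_group_is_group phi by (simp add: group_hom_def group_hom_axioms_def iso_def)
  have rc: "\<And>g. K #>\<^bsub>L'\<^esub> g = K #> g" by (simp add: L'_def r_coset_def)
  have coshom: "(\<lambda>a. K #>\<^bsub>L'\<^esub> a) \<in> hom L' (L' Mod K)" using normal.r_coset_hom_Mod[OF nK] .
  define \<psi> where "\<psi> = (\<lambda>g. \<phi> (K #> g))"
  have carM: "carrier (L' Mod K) = (\<lambda>g. K #> g) ` L"
    using carrier_FactGroup[of L' K] rc by (simp add: L'_def)
  have bij: "bij_betw \<phi> (carrier (L' Mod K)) A5c" using phi by (simp add: iso_def)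
  have "amal_psi G L E \<psi>"
  proof
    fix g assume "g \<in> L"
    then have "K #> g \<in> carrier (L' Mod K)" using carM by auto
    then show "\<psi> g \<in> A5c" unfolding \<psi>_def using bij bij_betwE by blast
  next
    fix x y assume xy: "x \<in> L" "y \<in> L"
    have "K #> (x \<otimes> y) = (K #> x) \<otimes>\<^bsub>L' Mod K\<^esub> (K #> y)"
      using coshom xy rc by (simp add: hom_def L'_def)
    moreover have "K #> x \<in> carrier (L' Mod K)" "K #> y \<in> carrier (L' Mod K)" using carM xy by auto
    ultimately show "\<psi> (x \<otimes> y) = \<psi> x \<circ> \<psi> y"
      unfolding \<psi>_def using group_hom.hom_mult[OF ghom] by (simp add: alt_group_mult)
  next
    show "\<psi> ` L = A5c" using bij carM unfolding \<psi>_def bij_betw_def by (simp add: image_image)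
  next
    fix g assume g: "g \<in> L"
    have one: "\<phi> K = id" using group_hom.hom_one[OF ghom] by (simp add: alt_group_one)
    have Kin: "K \<in> carrier (L' Mod K)" using monoid.one_closed[OF group.is_monoid[OF gM]] by simp
    have gin: "K #> g \<in> carrier (L' Mod K)" using carM g by auto
    have "\<psi> g = id \<longleftrightarrow> K #> g = K"
      unfolding \<psi>_def using one bij Kin gin by (metis bij_betw_def inj_on_eq_iff)
    also have "\<dots> \<longleftrightarrow> g \<in> K"
    proof
      assume "K #> g = K"
      then have "K #>\<^bsub>L'\<^esub> g = K" using rc by simp
      then show "g \<in> K" using group.coset_join1[OF gL' _ _ sKL] g by (simp add: L'_def)
    next
      assume "g \<in> K"
      then have "K #>\<^bsub>L'\<^esub> g = K" using group.coset_join2[OF gL' _ sKL] g by (simp add: L'_def)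
      then show "K #> g = K" using rc by simp
    qed
    finally show "\<psi> g = id \<longleftrightarrow> g \<in> K" .
  qed
  then show ?thesis by blast
qed

lemma conj_psi:
  assumes P: "amal_psi G L E \<psi>" and c: "c \<in> A5c"
  shows "amal_psi G L E (\<lambda>g. c \<circ> \<psi> g \<circ> inv\<^bsub>alt_group 5\<^esub> c)"
proof -
  interpret P: amal_psi G L E \<psi> by (rule P)
  have ic: "inv\<^bsub>alt_group 5\<^esub> c \<in> A5c" using c by simp
  have cc: "c \<circ> inv\<^bsub>alt_group 5\<^esub> c = id" "inv\<^bsub>alt_group 5\<^esub> c \<circ> c = id"
    using A5.r_inv[OF c] A5.l_inv[OF c] by (simp_all add: alt_group_mult alt_group_one)
  show ?thesis
  proof
    fix g assume "g \<in> L"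
    then show "c \<circ> \<psi> g \<circ> inv\<^bsub>alt_group 5\<^esub> c \<in> A5c"
      using P.psi_mem c ic A5.m_closed by (simp add: alt_group_mult)
  next
    fix x y assume "x \<in> L" "y \<in> L"
    then show "c \<circ> \<psi> (x \<otimes> y) \<circ> inv\<^bsub>alt_group 5\<^esub> c =
       (c \<circ> \<psi> x \<circ> inv\<^bsub>alt_group 5\<^esub> c) \<circ> (c \<circ> \<psi> y \<circ> inv\<^bsub>alt_group 5\<^esub> c)"
      using P.psi_mult cc by (simp add: fun_eq_iff)
  next
    show "(\<lambda>g. c \<circ> \<psi> g \<circ> inv\<^bsub>alt_group 5\<^esub> c) ` L = A5c"
    proof
      show "(\<lambda>g. c \<circ> \<psi> g \<circ> inv\<^bsub>alt_group 5\<^esub> c) ` L \<subseteq> A5c"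
        using P.psi_mem c ic A5.m_closed by (auto simp: alt_group_mult)
      show "A5c \<subseteq> (\<lambda>g. c \<circ> \<psi> g \<circ> inv\<^bsub>alt_group 5\<^esub> c) ` L"
      proof
        fix p assume p: "p \<in> A5c"
        have "inv\<^bsub>alt_group 5\<^esub> c \<circ> p \<circ> c \<in> A5c" using p c ic A5.m_closed by (simp add: alt_group_mult)
        then have "inv\<^bsub>alt_group 5\<^esub> c \<circ> p \<circ> c \<in> \<psi> ` L" using P.psi_onto by simp
        then obtain g where g: "g \<in> L" "\<psi> g = inv\<^bsub>alt_group 5\<^esub> c \<circ> p \<circ> c" by (metis imageE)
        have pw: "\<And>x. c ((inv\<^bsub>alt_group 5\<^esub> c) x) = x" "\<And>x. (inv\<^bsub>alt_group 5\<^esub> c) (c x) = x"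
          using cc by (simp_all add: fun_eq_iff)
        have "c \<circ> \<psi> g \<circ> inv\<^bsub>alt_group 5\<^esub> c = p" using g(2) pw by (simp add: fun_eq_iff)
        then show "p \<in> (\<lambda>g. c \<circ> \<psi> g \<circ> inv\<^bsub>alt_group 5\<^esub> c) ` L" using g(1) by force
      qed
    qed
  next
    fix g assume g: "g \<in> L"
    have "c \<circ> \<psi> g \<circ> inv\<^bsub>alt_group 5\<^esub> c = id \<longleftrightarrow> \<psi> g = id"
    proof
      assume "c \<circ> \<psi> g \<circ> inv\<^bsub>alt_group 5\<^esub> c = id"
      then have "inv\<^bsub>alt_group 5\<^esub> c \<circ> (c \<circ> \<psi> g \<circ> inv\<^bsub>alt_group 5\<^esub> c) \<circ> c = inv\<^bsub>alt_group 5\<^esub> c \<circ> c" by simp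
      moreover have pw: "\<And>x. c ((inv\<^bsub>alt_group 5\<^esub> c) x) = x" "\<And>x. (inv\<^bsub>alt_group 5\<^esub> c) (c x) = x"
          using cc by (simp_all add: fun_eq_iff)
      ultimately show "\<psi> g = id" by (simp add: fun_eq_iff)
    next
      assume "\<psi> g = id" then show "c \<circ> \<psi> g \<circ> inv\<^bsub>alt_group 5\<^esub> c = id" using cc by simp
    qed
    then show "c \<circ> \<psi> g \<circ> inv\<^bsub>alt_group 5\<^esub> c = id \<longleftrightarrow> g \<in> K" using P.psi_ker[OF g] by simp
  qed
qed

lemma exists_psi4:
  assumes hA: "G\<lparr>carrier := L\<rparr> Mod K \<cong> alt_group 5"
  shows "\<exists>\<psi>. amal_psi G L E \<psi> \<and> \<psi> ` B = A4c"
proof -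
  obtain \<psi> where P: "amal_psi G L E \<psi>" using exists_psi[OF hA] by blast
  interpret P: amal_psi G L E \<psi> by (rule P)
  have sH: "subgroup (\<psi> ` B) (alt_group 5)" using P.psi_sub[OF sB] by auto
  obtain i where i: "i \<in> {1..5}" "\<forall>p\<in>\<psi> ` B. p i = i"
    using fixpoint_12[OF sH P.card_psi_B] by blast
  obtain c where c: "c \<in> A5c" "c i = 5" using fix_in_A5c[OF i(1)] by blast
  define \<psi>' where "\<psi>' = (\<lambda>g. c \<circ> \<psi> g \<circ> inv\<^bsub>alt_group 5\<^esub> c)"
  have P': "amal_psi G L E \<psi>'" unfolding \<psi>'_def by (rule conj_psi[OF P c(1)])
  interpret P': amal_psi G L E \<psi>' by (rule P')
  have ic: "(inv\<^bsub>alt_group 5\<^esub> c) 5 = i"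
  proof -
    have "inv\<^bsub>alt_group 5\<^esub> c \<circ> c = id" using A5.l_inv[OF c(1)] by (simp add: alt_group_mult alt_group_one)
    then have "(inv\<^bsub>alt_group 5\<^esub> c) (c i) = i" by (metis comp_apply id_apply)
    then show ?thesis using c(2) by simp
  qed
  have sub: "\<psi>' ` B \<subseteq> A4c"
  proof
    fix p assume "p \<in> \<psi>' ` B"
    then obtain b where b: "b \<in> B" "p = \<psi>' b" by auto
    have "p \<in> A5c" using b P'.psi_mem by auto
    moreover have "p 5 = 5" using b ic i(2) c(2) by (simp add: \<psi>'_def)
    ultimately show "p \<in> A4c" using A4c_eq_stab by auto
  qed
  have cA4: "card A4c = 12" using alt_group_card_carrier[of 4] by (simp add: fact_numeral)
  have "finite A4c" using cA4 card.infinite by fastforce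
  then have "\<psi>' ` B = A4c" using card_subset_eq[OF _ sub] P'.card_psi_B cA4 by simp
  then show ?thesis using P' by blast
qed

end


lemma dvd_4_12: "(4::nat) dvd n \<Longrightarrow> n dvd 12 \<Longrightarrow> n = 4 \<or> n = 12"
proof -
  assume a: "(4::nat) dvd n" "n dvd 12"
  obtain b where b: "n = 4 * b" using a(1) by (auto simp: dvd_def)
  obtain c where c: "12 = n * c" using a(2) by (auto simp: dvd_def)
  have bc: "b * c = 3" using b c by simp
  then have "b \<le> 3" by (metis dvd_imp_le dvd_triv_left zero_less_numeral)
  then have "b = 0 \<or> b = 1 \<or> b = 2 \<or> b = 3" by presburger
  then show ?thesis using bc b by (elim disjE) (simp_all, presburger)
qed

lemma cA4: "card A4c = 12" using alt_group_card_carrier[of 4] by (simp add: fact_numeral)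

locale amal_psi4 = amal_psi +
  assumes B4: "\<psi> ` B = A4c"
begin

abbreviation "N \<equiv> \<psi> ` M"

lemma N_sub: "N \<subseteq> A4c" using M_sub_B B4 by auto

lemma sN: "subgroup N (alt_group 5)" using psi_sub[OF sM] M_sub_B by auto

lemma sA4: "subgroup A4c (alt_group 5)" using psi_sub[OF sB] B4 by auto

lemma N_mul: "\<forall>x\<in>N. \<forall>y\<in>N. x \<circ> y \<in> N"
  using subgroup.m_closed[OF sN] by (simp add: alt_group_mult)

lemma N_conj: "\<forall>g\<in>A4c. \<forall>x\<in>N. g \<circ> x \<circ> inv\<^bsub>alt_group 5\<^esub> g \<in> N"
proof (intro ballI)
  fix g x assume g: "g \<in> A4c" and x: "x \<in> N"
  obtain b where b: "b \<in> B" "g = \<psi> b" using g B4 by auto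
  obtain m where m: "m \<in> M" "x = \<psi> m" using x by auto
  have "\<psi> (b \<otimes> m \<otimes> inv b) = g \<circ> x \<circ> inv\<^bsub>alt_group 5\<^esub> g"
    using psi_conj b m M_sub_B by auto
  moreover have "b \<otimes> m \<otimes> inv b \<in> M" using M_normal_B b m by auto
  ultimately show "g \<circ> x \<circ> inv\<^bsub>alt_group 5\<^esub> g \<in> N" by (metis image_eqI)
qed

lemma N_nontriv: "\<exists>n\<in>N. n \<noteq> id"
proof -
  obtain k where k: "k \<in> K" "k \<noteq> \<one>" using h2 subgroup.one_closed[OF sK] by blast
  have kc: "k \<in> carrier G" using k Kc by auto
  define m where "m = t \<otimes> k \<otimes> inv t"
  have m: "m \<in> M" using k M_eq m_def by auto
  have "m \<noteq> \<one>"
  proof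
    assume "m = \<one>"
    then have "t \<otimes> k \<otimes> inv t = t \<otimes> \<one> \<otimes> inv t" using tc by (simp add: m_def)
    then show False using conj_inj kc tc k(2) by (metis inj_on_eq_iff one_closed)
  qed
  then have "m \<notin> K" using m KM_inter by auto
  then have "\<psi> m \<noteq> id" using psi_ker m M_sub_B by auto
  then show ?thesis using m by auto
qed

lemma V_sub_N: "lp ` set Vl \<subseteq> N"
  using A4_normal_V[OF N_sub N_mul N_conj] N_nontriv by blast

lemma card_K_cases: "card K = 4 \<or> card K = 12"
proof -
  have "card N dvd card A4c" using group.sub_dvd[OF alt_group_is_group sN sA4 N_sub] .
  moreover have "card (lp ` set Vl) dvd card N" using group.sub_dvd[OF alt_group_is_group V_subgroup sN V_sub_N] .
  ultimately show ?thesis using card_psi_M card_V cA4 dvd_4_12 by simp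
qed

end


context amal_psi4 begin

definition Cz where "Cz = {g \<in> L. \<forall>k\<in>K. g \<otimes> k = k \<otimes> g}"

lemma Cz_sub: "Cz \<subseteq> L" by (auto simp: Cz_def)

lemma sCz: "subgroup Cz G"
proof (rule subgroupI)
  show "Cz \<subseteq> carrier G" using Cz_sub Lc by auto
  have "\<one> \<in> Cz" using oneL Kc by (auto simp: Cz_def subset_iff)
  then show "Cz \<noteq> {}" by auto
next
  fix a assume a: "a \<in> Cz"
  then have aL: "a \<in> L" and ac: "a \<in> carrier G" using Lc by (auto simp: Cz_def)
  show "inv a \<in> Cz" unfolding Cz_def
  proof (intro CollectI conjI ballI)
    show "inv a \<in> L" using subgroup.m_inv_closed[OF sL aL] .
    fix k assume k: "k \<in> K"
    then have kc: "k \<in> carrier G" using Kc by auto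
    have "a \<otimes> k = k \<otimes> a" using a k by (auto simp: Cz_def)
    then have "inv a \<otimes> (a \<otimes> k) \<otimes> inv a = inv a \<otimes> (k \<otimes> a) \<otimes> inv a" by simp
    then show "inv a \<otimes> k = k \<otimes> inv a" using ac kc by (simp add: m_assoc)
  qed
next
  fix a b assume a: "a \<in> Cz" and b: "b \<in> Cz"
  then have aL: "a \<in> L" "b \<in> L" and ac: "a \<in> carrier G" "b \<in> carrier G" using Lc by (auto simp: Cz_def)
  show "a \<otimes> b \<in> Cz" unfolding Cz_def
  proof (intro CollectI conjI ballI)
    show "a \<otimes> b \<in> L" using subgroup.m_closed[OF sL aL] .
    fix k assume k: "k \<in> K"
    then have kc: "k \<in> carrier G" using Kc by auto
    have e: "a \<otimes> k = k \<otimes> a" "b \<otimes> k = k \<otimes> b" using a b k by (auto simp: Cz_def)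
    have "a \<otimes> b \<otimes> k = a \<otimes> (b \<otimes> k)" using ac kc by (simp add: m_assoc)
    also have "\<dots> = a \<otimes> (k \<otimes> b)" using e by simp
    also have "\<dots> = (a \<otimes> k) \<otimes> b" using ac kc by (simp add: m_assoc)
    also have "\<dots> = (k \<otimes> a) \<otimes> b" using e by simp
    also have "\<dots> = k \<otimes> (a \<otimes> b)" using ac kc by (simp add: m_assoc)
    finally show "a \<otimes> b \<otimes> k = k \<otimes> (a \<otimes> b)" .
  qed
qed

lemma Cz_normal: "g \<in> L \<Longrightarrow> c \<in> Cz \<Longrightarrow> g \<otimes> c \<otimes> inv g \<in> Cz"
proof -
  assume g: "g \<in> L" and c: "c \<in> Cz"
  have gc: "g \<in> carrier G" and cL: "c \<in> L" and cc: "c \<in> carrier G" using g c Lc by (auto simp: Cz_def)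
  show ?thesis unfolding Cz_def
  proof (intro CollectI conjI ballI)
    show "g \<otimes> c \<otimes> inv g \<in> L"
      using subgroup.m_closed[OF sL subgroup.m_closed[OF sL g cL] subgroup.m_inv_closed[OF sL g]] .
    fix k assume k: "k \<in> K"
    then have kc: "k \<in> carrier G" using Kc by auto
    have "inv g \<otimes> k \<otimes> g \<in> K" using K_normal'[OF g k] .
    then have e: "c \<otimes> (inv g \<otimes> k \<otimes> g) = (inv g \<otimes> k \<otimes> g) \<otimes> c" using c by (auto simp: Cz_def)
    have "g \<otimes> c \<otimes> inv g \<otimes> k = g \<otimes> (c \<otimes> (inv g \<otimes> k \<otimes> g)) \<otimes> inv g"
      using gc cc kc by (simp add: m_assoc)
    also have "\<dots> = g \<otimes> ((inv g \<otimes> k \<otimes> g) \<otimes> c) \<otimes> inv g" using e by simp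
    also have "\<dots> = k \<otimes> (g \<otimes> c \<otimes> inv g)" using gc cc kc by (simp add: m_assoc)
    finally show "g \<otimes> c \<otimes> inv g \<otimes> k = k \<otimes> (g \<otimes> c \<otimes> inv g)" .
  qed
qed

lemma M_sub_Cz: "M \<subseteq> Cz"
  using M_sub_B KM_comm by (auto simp: Cz_def)

lemma psi_Cz_full: "\<psi> ` Cz = A5c"
proof (rule A5_normal_full)
  show "subgroup (\<psi> ` Cz) (alt_group 5)" using psi_sub[OF sCz Cz_sub] .
  show "\<forall>g\<in>A5c. \<forall>x\<in>\<psi> ` Cz. g \<circ> x \<circ> inv\<^bsub>alt_group 5\<^esub> g \<in> \<psi> ` Cz"
  proof (intro ballI)
    fix p x assume p: "p \<in> A5c" and x: "x \<in> \<psi> ` Cz"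
    obtain g where g: "g \<in> L" "p = \<psi> g" using p psi_onto by (metis imageE)
    obtain c where c: "c \<in> Cz" "x = \<psi> c" using x by auto
    have "\<psi> (g \<otimes> c \<otimes> inv g) = p \<circ> x \<circ> inv\<^bsub>alt_group 5\<^esub> p" using psi_conj g c Cz_sub by auto
    then show "p \<circ> x \<circ> inv\<^bsub>alt_group 5\<^esub> p \<in> \<psi> ` Cz" using Cz_normal[OF g(1) c(1)] by (metis image_eqI)
  qed
  show "lp [2,1,4,3,5] \<in> \<psi> ` Cz" using d_in_V V_sub_N M_sub_Cz by auto
qed

lemma case4_false: "card K = 4 \<Longrightarrow> False"
proof -
  assume c4: "card K = 4"
  have "finite A4c" by (rule card_ge_0_finite) (simp add: cA4)
  then have finN: "finite N" using finite_subset[OF N_sub] by blast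
  have NV: "N = lp ` set Vl" using card_subset_eq[OF finN V_sub_N] card_V card_psi_M c4 by simp
  have Mab: "\<And>m1 m2. m1 \<in> M \<Longrightarrow> m2 \<in> M \<Longrightarrow> m1 \<otimes> m2 = m2 \<otimes> m1"
  proof -
    fix m1 m2 assume m: "m1 \<in> M" "m2 \<in> M"
    have mL: "m1 \<in> L" "m2 \<in> L" using m M_sub_B by auto
    have "\<psi> (m1 \<otimes> m2) = \<psi> (m2 \<otimes> m1)"
    proof -
      have "\<psi> m1 \<in> lp ` set Vl" "\<psi> m2 \<in> lp ` set Vl" using NV m by auto
      then have "\<psi> m1 \<circ> \<psi> m2 = \<psi> m2 \<circ> \<psi> m1" by (rule V_comm)
      then show ?thesis using psi_mult[OF mL] psi_mult[OF mL(2,1)] by simp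
    qed
    then show "m1 \<otimes> m2 = m2 \<otimes> m1"
      using psi_inj_M subgroup.m_closed[OF sM m] subgroup.m_closed[OF sM m(2) m(1)] by (meson inj_onD)
  qed
  have Kab: "K \<subseteq> Cz" unfolding Cz_def
  proof (intro subsetI CollectI conjI ballI)
    fix k1 assume k1: "k1 \<in> K" then show "k1 \<in> L" using K_sub_L by auto
    fix k2 assume k2: "k2 \<in> K"
    have kc: "k1 \<in> carrier G" "k2 \<in> carrier G" using k1 k2 Kc by auto
    have "(t \<otimes> k1 \<otimes> inv t) \<otimes> (t \<otimes> k2 \<otimes> inv t) = (t \<otimes> k2 \<otimes> inv t) \<otimes> (t \<otimes> k1 \<otimes> inv t)"
    proof -
      have "t \<otimes> k1 \<otimes> inv t \<in> M" "t \<otimes> k2 \<otimes> inv t \<in> M" using M_eq k1 k2 by auto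
      then show ?thesis by (rule Mab)
    qed
    then have "t \<otimes> (k1 \<otimes> k2) \<otimes> inv t = t \<otimes> (k2 \<otimes> k1) \<otimes> inv t" using kc tc by (simp add: m_assoc)
    moreover have "k1 \<otimes> k2 \<in> carrier G" "k2 \<otimes> k1 \<in> carrier G" using kc by auto
    ultimately show "k1 \<otimes> k2 = k2 \<otimes> k1" using inj_onD[OF conj_inj] by blast
  qed
  have LC: "L \<subseteq> Cz"
  proof
    fix g assume g: "g \<in> L"
    then have "\<psi> g \<in> \<psi> ` Cz" using psi_Cz_full psi_mem by auto
    then obtain c where c: "c \<in> Cz" "\<psi> g = \<psi> c" by auto
    have cL: "c \<in> L" using c Cz_sub by auto
    have "g \<otimes> inv c \<in> Cz" using psi_eq[OF g cL c(2)] Kab by auto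
    then have "g \<otimes> inv c \<otimes> c \<in> Cz" using subgroup.m_closed[OF sCz _ c(1)] by blast
    then show "g \<in> Cz" using g cL Lc by (simp add: m_assoc subset_iff)
  qed
  obtain b where b: "b \<in> B" "\<psi> b = lp [2,3,1,4,5]" using c1_in4 B4 by (metis imageE)
  have "lp [2,1,4,3,5] \<in> N" using d_in_V NV by simp
  then obtain m where m: "m \<in> M" "\<psi> m = lp [2,1,4,3,5]" by (metis imageE)
  obtain k where k: "k \<in> K" "m = t \<otimes> k \<otimes> inv t" using m M_eq by auto
  have kc: "k \<in> carrier G" and bc: "b \<in> carrier G" using k b Kc Bc by auto
  have b': "inv t \<otimes> b \<otimes> t \<in> Cz" using conjB'[OF b(1)] LC by auto
  then have e: "(inv t \<otimes> b \<otimes> t) \<otimes> k = k \<otimes> (inv t \<otimes> b \<otimes> t)" using k by (auto simp: Cz_def)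
  have "b \<otimes> m = t \<otimes> ((inv t \<otimes> b \<otimes> t) \<otimes> k) \<otimes> inv t" using k(2) kc bc tc by (simp add: m_assoc)
  also have "\<dots> = t \<otimes> (k \<otimes> (inv t \<otimes> b \<otimes> t)) \<otimes> inv t" using e by simp
  also have "\<dots> = m \<otimes> b" using k(2) kc bc tc by (simp add: m_assoc)
  finally have "b \<otimes> m = m \<otimes> b" .
  moreover have "b \<in> L" "m \<in> L" using b m M_sub_B by auto
  ultimately have "\<psi> b \<circ> \<psi> m = \<psi> m \<circ> \<psi> b" using psi_mult[of b m] psi_mult[of m b] by simp
  then show False using b(2) m(2) c12_noncomm by simp
qed

end


locale amal12 = amal_psi4 +
  assumes c12: "card K = 12"
begin

lemma NA4: "N = A4c"
proof -
  have "finite A4c" by (rule card_ge_0_finite) (simp add: cA4)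
  then show ?thesis using card_subset_eq[OF _ N_sub] card_psi_M c12 cA4 by simp
qed

lemma Cz_K: "Cz \<inter> K = {\<one>}"
proof
  show "{\<one>} \<subseteq> Cz \<inter> K" using subgroup.one_closed[OF sCz] subgroup.one_closed[OF sK] by auto
  show "Cz \<inter> K \<subseteq> {\<one>}"
  proof
    fix z assume z: "z \<in> Cz \<inter> K"
    then have zc: "z \<in> carrier G" using Kc by auto
    define mz where "mz = t \<otimes> z \<otimes> inv t"
    have mz: "mz \<in> M" using z M_eq mz_def by auto
    have mzL: "mz \<in> L" using mz M_sub_B by auto
    have comm: "\<forall>g\<in>A4c. \<psi> mz \<circ> g = g \<circ> \<psi> mz"
    proof
      fix g assume "g \<in> A4c"
      then have "g \<in> N" using NA4 by simp
      then obtain m where m: "m \<in> M" "g = \<psi> m" by auto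
      then obtain k where k: "k \<in> K" "m = t \<otimes> k \<otimes> inv t" using M_eq by auto
      have kc: "k \<in> carrier G" using k Kc by auto
      have e: "z \<otimes> k = k \<otimes> z" using z k by (auto simp: Cz_def)
      have "mz \<otimes> m = t \<otimes> (z \<otimes> k) \<otimes> inv t" using k(2) zc kc tc by (simp add: mz_def m_assoc)
      also have "\<dots> = t \<otimes> (k \<otimes> z) \<otimes> inv t" using e by simp
      also have "\<dots> = m \<otimes> mz" using k(2) zc kc tc by (simp add: mz_def m_assoc)
      finally have "mz \<otimes> m = m \<otimes> mz" .
      moreover have "m \<in> L" using m M_sub_B by auto
      ultimately have "\<psi> (mz \<otimes> m) = \<psi> (m \<otimes> mz)" by simp
      then show "\<psi> mz \<circ> g = g \<circ> \<psi> mz" using psi_mult[OF mzL \<open>m \<in> L\<close>] psi_mult[OF \<open>m \<in> L\<close> mzL] m(2) by simp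
    qed
    have "\<psi> mz \<in> A4c" using mz NA4 by auto
    then have "\<psi> mz = id" using A4_center comm by blast
    then have "mz \<in> K" using psi_ker mzL by simp
    then have "mz = \<one>" using mz KM_inter by auto
    then have "t \<otimes> z \<otimes> inv t = t \<otimes> \<one> \<otimes> inv t" using tc by (simp add: mz_def)
    then show "z \<in> {\<one>}" using inj_onD[OF conj_inj] zc by auto
  qed
qed

lemma psi_inj_Cz: "inj_on \<psi> Cz"
proof (rule inj_onI)
  fix x y assume xy: "x \<in> Cz" "y \<in> Cz" "\<psi> x = \<psi> y"
  have xL: "x \<in> L" "y \<in> L" using xy Cz_sub by auto
  have "x \<otimes> inv y \<in> K" using psi_eq xL xy(3) by auto
  moreover have "x \<otimes> inv y \<in> Cz" using subgroup.m_closed[OF sCz xy(1) subgroup.m_inv_closed[OF sCz xy(2)]] .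
  ultimately have "x \<otimes> inv y = \<one>" using Cz_K by auto
  then show "x = y" using xy xL Lc by (metis inv_closed inv_equality inv_inv subsetD r_inv)
qed

definition \<nu> where "\<nu> = inv_into Cz \<psi>"
definition \<mu> where "\<mu> = inv_into M \<psi>"
definition \<alpha> where "\<alpha> = (\<lambda>q. inv t \<otimes> \<mu> q \<otimes> t)"

lemma nu: "p \<in> A5c \<Longrightarrow> \<nu> p \<in> Cz \<and> \<psi> (\<nu> p) = p"
  using psi_Cz_full by (auto simp: \<nu>_def inv_into_into f_inv_into_f)

lemma mu: "q \<in> A4c \<Longrightarrow> \<mu> q \<in> M \<and> \<psi> (\<mu> q) = q"
  using NA4 by (auto simp: \<mu>_def inv_into_into f_inv_into_f)

lemma conj_back: "m \<in> M \<Longrightarrow> inv t \<otimes> m \<otimes> t \<in> K"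
proof -
  assume "m \<in> M"
  then obtain k where k: "k \<in> K" "m = t \<otimes> k \<otimes> inv t" using M_eq by auto
  then have "inv t \<otimes> m \<otimes> t = k" using Kc tc by (simp add: m_assoc subset_iff)
  then show ?thesis using k by simp
qed

lemma alpha_K: "q \<in> A4c \<Longrightarrow> \<alpha> q \<in> K"
  using mu conj_back by (simp add: \<alpha>_def)

lemma alpha_c: "q \<in> A4c \<Longrightarrow> \<alpha> q \<in> carrier G" using alpha_K Kc by auto

lemma nu_c: "p \<in> A5c \<Longrightarrow> \<nu> p \<in> carrier G" using nu Cz_sub Lc by blast

lemma A4_mult: "q \<in> A4c \<Longrightarrow> q' \<in> A4c \<Longrightarrow> q \<circ> q' \<in> A4c"
proof -
  assume "q \<in> A4c" "q' \<in> A4c"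
  then show ?thesis using monoid.m_closed[OF group.is_monoid[OF alt_group_is_group]] by (fastforce simp: alt_group_mult)
qed

lemma mu_mult: "q \<in> A4c \<Longrightarrow> q' \<in> A4c \<Longrightarrow> \<mu> (q \<circ> q') = \<mu> q \<otimes> \<mu> q'"
proof -
  assume q: "q \<in> A4c" "q' \<in> A4c"
  have m: "\<mu> q \<in> M" "\<mu> q' \<in> M" using mu q by auto
  have mL: "\<mu> q \<in> L" "\<mu> q' \<in> L" using m M_sub_B by auto
  have "\<psi> (\<mu> q \<otimes> \<mu> q') = q \<circ> q'" using psi_mult[OF mL] mu q by simp
  moreover have "\<mu> q \<otimes> \<mu> q' \<in> M" using subgroup.m_closed[OF sM m] .
  moreover have "\<mu> (q \<circ> q') \<in> M" "\<psi> (\<mu> (q \<circ> q')) = q \<circ> q'" using mu A4_mult[OF q] by auto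
  ultimately show ?thesis using inj_onD[OF psi_inj_M] by metis
qed

lemma alpha_mult: "q \<in> A4c \<Longrightarrow> q' \<in> A4c \<Longrightarrow> \<alpha> (q \<circ> q') = \<alpha> q \<otimes> \<alpha> q'"
proof -
  assume q: "q \<in> A4c" "q' \<in> A4c"
  have mc: "\<mu> q \<in> carrier G" "\<mu> q' \<in> carrier G" using mu q Mc by auto
  show ?thesis using mu_mult[OF q] mc tc by (simp add: \<alpha>_def m_assoc)
qed

lemma alpha_inj: "inj_on \<alpha> A4c"
proof (rule inj_onI)
  fix q q' assume q: "q \<in> A4c" "q' \<in> A4c" "\<alpha> q = \<alpha> q'"
  have mc: "\<mu> q \<in> carrier G" "\<mu> q' \<in> carrier G" using mu q Mc by auto
  have "t \<otimes> \<alpha> q \<otimes> inv t = t \<otimes> \<alpha> q' \<otimes> inv t" using q(3) by simp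
  then have "\<mu> q = \<mu> q'" using mc tc by (simp add: \<alpha>_def m_assoc)
  then show "q = q'" using mu q by metis
qed

lemma nu_mult: "p \<in> A5c \<Longrightarrow> p' \<in> A5c \<Longrightarrow> \<nu> (p \<circ> p') = \<nu> p \<otimes> \<nu> p'"
proof -
  assume p: "p \<in> A5c" "p' \<in> A5c"
  have c: "\<nu> p \<in> Cz" "\<nu> p' \<in> Cz" using nu p by auto
  have cL: "\<nu> p \<in> L" "\<nu> p' \<in> L" using c Cz_sub by auto
  have "\<psi> (\<nu> p \<otimes> \<nu> p') = p \<circ> p'" using psi_mult[OF cL] nu p by simp
  moreover have "\<nu> p \<otimes> \<nu> p' \<in> Cz" using subgroup.m_closed[OF sCz c] .
  moreover have "p \<circ> p' \<in> A5c" using A5.m_closed p by (simp add: alt_group_mult)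
  ultimately show ?thesis using nu inj_onD[OF psi_inj_Cz] by metis
qed

lemma nu_alpha_comm: "p \<in> A5c \<Longrightarrow> q \<in> A4c \<Longrightarrow> \<nu> p \<otimes> \<alpha> q = \<alpha> q \<otimes> \<nu> p"
  using nu alpha_K by (auto simp: Cz_def)

definition F1 where "F1 = (\<lambda>(p, q). \<nu> p \<otimes> \<alpha> q)"

lemma F1_hom: "F1 \<in> hom (alt_group 5 \<times>\<times> alt_group 4) (G\<lparr>carrier := L\<rparr>)"
proof (rule homI)
  fix x assume "x \<in> carrier (alt_group 5 \<times>\<times> alt_group 4)"
  then obtain p q where pq: "x = (p, q)" "p \<in> A5c" "q \<in> A4c" by (auto simp: DirProd_def)
  have "\<nu> p \<in> L" "\<alpha> q \<in> L" using nu pq Cz_sub alpha_K K_sub_L by auto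
  then show "F1 x \<in> carrier (G\<lparr>carrier := L\<rparr>)" using pq subgroup.m_closed[OF sL] by (simp add: F1_def)
next
  fix x y assume "x \<in> carrier (alt_group 5 \<times>\<times> alt_group 4)" "y \<in> carrier (alt_group 5 \<times>\<times> alt_group 4)"
  then obtain p q p' q' where pq: "x = (p, q)" "p \<in> A5c" "q \<in> A4c" "y = (p', q')" "p' \<in> A5c" "q' \<in> A4c"
    by (auto simp: DirProd_def)
  have c: "\<nu> p \<in> carrier G" "\<nu> p' \<in> carrier G" "\<alpha> q \<in> carrier G" "\<alpha> q' \<in> carrier G"
    using nu_c alpha_c pq by auto
  have "F1 (x \<otimes>\<^bsub>alt_group 5 \<times>\<times> alt_group 4\<^esub> y) = \<nu> (p \<circ> p') \<otimes> \<alpha> (q \<circ> q')"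
    using pq by (simp add: F1_def DirProd_def alt_group_mult)
  also have "\<dots> = \<nu> p \<otimes> (\<nu> p' \<otimes> \<alpha> q) \<otimes> \<alpha> q'"
    using nu_mult alpha_mult pq c by (simp add: m_assoc)
  also have "\<dots> = \<nu> p \<otimes> (\<alpha> q \<otimes> \<nu> p') \<otimes> \<alpha> q'" using nu_alpha_comm pq by simp
  also have "\<dots> = F1 x \<otimes>\<^bsub>G\<lparr>carrier := L\<rparr>\<^esub> F1 y" using pq c by (simp add: F1_def m_assoc)
  finally show "F1 (x \<otimes>\<^bsub>alt_group 5 \<times>\<times> alt_group 4\<^esub> y) = F1 x \<otimes>\<^bsub>G\<lparr>carrier := L\<rparr>\<^esub> F1 y" .
qed

lemma F1_inj: "inj_on F1 (carrier (alt_group 5 \<times>\<times> alt_group 4))"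
proof (rule inj_onI)
  fix x y assume "x \<in> carrier (alt_group 5 \<times>\<times> alt_group 4)" "y \<in> carrier (alt_group 5 \<times>\<times> alt_group 4)"
    and e: "F1 x = F1 y"
  then obtain p q p' q' where pq: "x = (p, q)" "p \<in> A5c" "q \<in> A4c" "y = (p', q')" "p' \<in> A5c" "q' \<in> A4c"
    by (auto simp: DirProd_def)
  have c: "\<nu> p \<in> carrier G" "\<nu> p' \<in> carrier G" "\<alpha> q \<in> carrier G" "\<alpha> q' \<in> carrier G"
    using nu_c alpha_c pq by auto
  have e2: "\<nu> p \<otimes> \<alpha> q = \<nu> p' \<otimes> \<alpha> q'" using e pq by (simp add: F1_def)
  have "inv (\<nu> p') \<otimes> \<nu> p = \<alpha> q' \<otimes> inv (\<alpha> q)"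
  proof -
    have "inv (\<nu> p') \<otimes> (\<nu> p \<otimes> \<alpha> q) \<otimes> inv (\<alpha> q) = inv (\<nu> p') \<otimes> (\<nu> p' \<otimes> \<alpha> q') \<otimes> inv (\<alpha> q)"
      using e2 by simp
    then show ?thesis using c by (simp add: m_assoc)
  qed
  moreover have "inv (\<nu> p') \<otimes> \<nu> p \<in> Cz"
    using subgroup.m_closed[OF sCz subgroup.m_inv_closed[OF sCz] ] nu pq by blast
  moreover have "\<alpha> q' \<otimes> inv (\<alpha> q) \<in> K"
    using subgroup.m_closed[OF sK _ subgroup.m_inv_closed[OF sK]] alpha_K pq by blast
  ultimately have 1: "inv (\<nu> p') \<otimes> \<nu> p = \<one>" "\<alpha> q' \<otimes> inv (\<alpha> q) = \<one>" using Cz_K by auto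
  have "\<nu> p = \<nu> p'" using 1(1) c by (metis inv_closed inv_equality inv_inv l_inv)
  then have "p = p'" using nu pq by metis
  moreover have "\<alpha> q' = \<alpha> q" using 1(2) c by (metis inv_equality inv_inv inv_closed r_inv)
  then have "q = q'" using inj_onD[OF alpha_inj] pq by metis
  ultimately show "x = y" using pq by simp
qed

lemma L_iso: "G\<lparr>carrier := L\<rparr> \<cong> alt_group 5 \<times>\<times> alt_group 4"
proof -
  have cD: "card (carrier (alt_group 5 \<times>\<times> alt_group 4)) = 720"
    using A5c_card cA4 by (simp add: DirProd_def card_cartesian_product)
  have sub: "F1 ` carrier (alt_group 5 \<times>\<times> alt_group 4) \<subseteq> L"
    using F1_hom by (auto simp: hom_def)
  have "card (F1 ` carrier (alt_group 5 \<times>\<times> alt_group 4)) = 720"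
    using card_image[OF F1_inj] cD by simp
  moreover have "card L = 720" using card_L c12 by simp
  ultimately have "F1 ` carrier (alt_group 5 \<times>\<times> alt_group 4) = L"
    using card_subset_eq[OF fL sub] by simp
  then have "F1 \<in> iso (alt_group 5 \<times>\<times> alt_group 4) (G\<lparr>carrier := L\<rparr>)"
    using F1_hom F1_inj by (simp add: iso_def bij_betw_def)
  then have "alt_group 5 \<times>\<times> alt_group 4 \<cong> G\<lparr>carrier := L\<rparr>" by (rule is_isoI)
  then show ?thesis
    using group.iso_sym[OF DirProd_group[OF alt_group_is_group alt_group_is_group]] by blast
qed

end


lemma iso_sym_gen:
  assumes h: "h \<in> hom A C" and b: "bij_betw h (carrier A) (carrier C)"
    and cl: "\<And>x y. x \<in> carrier A \<Longrightarrow> y \<in> carrier A \<Longrightarrow> x \<otimes>\<^bsub>A\<^esub> y \<in> carrier A"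
  shows "inv_into (carrier A) h \<in> iso C A"
proof -
  have bi: "bij_betw (inv_into (carrier A) h) (carrier C) (carrier A)" using b by (rule bij_betw_inv_into)
  have inj: "inj_on h (carrier A)" using b bij_betw_def by blast
  have "inv_into (carrier A) h \<in> hom C A"
  proof (rule homI)
    fix x assume "x \<in> carrier C"
    then show "inv_into (carrier A) h x \<in> carrier A" using bi bij_betwE by blast
  next
    fix x y assume xy: "x \<in> carrier C" "y \<in> carrier C"
    define u v where "u = inv_into (carrier A) h x" and "v = inv_into (carrier A) h y"
    have uv: "u \<in> carrier A" "v \<in> carrier A" using xy bi bij_betwE unfolding u_def v_def by blast+
    have hu: "h u = x" "h v = y" using xy b unfolding u_def v_def by (simp_all add: bij_betw_inv_into_right)
    have "h (u \<otimes>\<^bsub>A\<^esub> v) = x \<otimes>\<^bsub>C\<^esub> y" using h uv hu by (simp add: hom_def)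
    then have "inv_into (carrier A) h (x \<otimes>\<^bsub>C\<^esub> y) = u \<otimes>\<^bsub>A\<^esub> v"
      using inv_into_f_f[OF inj cl[OF uv]] by simp
    then show "inv_into (carrier A) h (x \<otimes>\<^bsub>C\<^esub> y) = inv_into (carrier A) h x \<otimes>\<^bsub>A\<^esub> inv_into (carrier A) h y"
      unfolding u_def v_def .
  qed
  then show ?thesis using bi by (simp add: iso_def)
qed

context amal12 begin

lemma E_iso: "G\<lparr>carrier := E\<rparr> \<cong> wreath_C2 (alt_group 4)"
proof -
  have ttL: "t \<otimes> t \<in> L" using tt_B by auto
  have "\<psi> (t \<otimes> t) \<in> N" using tt_B B4 NA4 by auto
  then obtain b0 where b0: "b0 \<in> M" "\<psi> b0 = \<psi> (t \<otimes> t)" by (metis imageE)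
  have b0L: "b0 \<in> L" and b0c: "b0 \<in> carrier G" using b0 M_sub_B Mc by auto
  define a0 where "a0 = t \<otimes> t \<otimes> inv b0"
  have a0: "a0 \<in> K" using psi_eq[OF ttL b0L] b0(2) by (simp add: a0_def)
  have a0c: "a0 \<in> carrier G" using a0 Kc by auto
  have W1: "t \<otimes> t = a0 \<otimes> b0" using b0c tc by (simp add: a0_def m_assoc)
  have W2: "t \<otimes> a0 \<otimes> inv t = b0"
  proof -
    define k' where "k' = t \<otimes> b0 \<otimes> inv t"
    define m' where "m' = t \<otimes> a0 \<otimes> inv t"
    have k': "k' \<in> K" using conj_t_M[OF b0(1)] by (simp add: k'_def)
    have m': "m' \<in> M" using M_eq a0 by (auto simp: m'_def)
    have "t \<otimes> (t \<otimes> t) \<otimes> inv t = t \<otimes> t" using tc by (simp add: m_assoc)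
    then have "t \<otimes> (a0 \<otimes> b0) \<otimes> inv t = a0 \<otimes> b0" using W1 by simp
    moreover have "t \<otimes> (a0 \<otimes> b0) \<otimes> inv t = m' \<otimes> k'" using a0c b0c tc by (simp add: m'_def k'_def m_assoc)
    moreover have "m' \<otimes> k' = k' \<otimes> m'" using KM_comm[OF k' m'] by simp
    ultimately have "k' \<otimes> m' = a0 \<otimes> b0" by simp
    then show ?thesis using KM_unique[OF k' a0 m' b0(1)] by (simp add: m'_def)
  qed
  define s where "s = inv a0 \<otimes> t"
  have sc: "s \<in> carrier G" using a0c tc by (simp add: s_def)
  have ia0B: "inv a0 \<in> B" using subgroup.m_inv_closed[OF sK a0] K_sub_B by auto
  have ib0: "inv b0 \<in> M" using subgroup.m_inv_closed[OF sM b0(1)] .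
  have ss: "s \<otimes> s = \<one>"
  proof -
    have e1: "t \<otimes> inv a0 \<otimes> inv t = inv b0" using W2 a0c tc by (metis inv_mult_group inv_inv inv_closed m_closed m_assoc)
    have e2: "inv b0 \<otimes> a0 = a0 \<otimes> inv b0" using KM_comm[OF a0 ib0] by simp
    have "s \<otimes> s = inv a0 \<otimes> (t \<otimes> inv a0 \<otimes> inv t) \<otimes> (t \<otimes> t)" using a0c tc by (simp add: s_def m_assoc)
    also have "\<dots> = inv a0 \<otimes> (inv b0 \<otimes> a0) \<otimes> b0" using e1 W1 a0c b0c by (simp add: m_assoc)
    also have "\<dots> = inv a0 \<otimes> (a0 \<otimes> inv b0) \<otimes> b0" using e2 by simp
    also have "\<dots> = \<one>" using a0c b0c by (simp add: m_assoc)
    finally show ?thesis .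
  qed
  have invs: "inv s = s" using ss sc by (simp add: inv_equality)
  have s_E: "s \<in> E" using subgroup.m_closed[OF sE _ t_props(1)] ia0B by (auto simp: s_def)
  have snL: "s \<notin> L"
  proof
    assume "s \<in> L"
    then have "a0 \<otimes> s \<in> L" using subgroup.m_closed[OF sL] a0 K_sub_L by auto
    then show False using a0c tc t_props(2) by (simp add: s_def m_assoc[symmetric])
  qed
  define \<beta> where "\<beta> = (\<lambda>y. s \<otimes> \<alpha> y \<otimes> s)"
  have beta_M: "\<And>y. y \<in> A4c \<Longrightarrow> \<beta> y \<in> M"
  proof -
    fix y assume y: "y \<in> A4c"
    have k: "\<alpha> y \<in> K" using alpha_K[OF y] .
    then have kc: "\<alpha> y \<in> carrier G" using Kc by auto
    have "inv a0 \<otimes> (t \<otimes> \<alpha> y \<otimes> inv t) \<otimes> inv (inv a0) \<in> M"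
      using M_normal_B[OF ia0B] M_eq k by auto
    moreover have "inv a0 \<otimes> (t \<otimes> \<alpha> y \<otimes> inv t) \<otimes> inv (inv a0) = s \<otimes> \<alpha> y \<otimes> inv s"
      using a0c tc kc by (simp add: s_def m_assoc inv_mult_group)
    ultimately show "\<beta> y \<in> M" using invs by (simp add: \<beta>_def)
  qed
  have beta_c: "\<And>y. y \<in> A4c \<Longrightarrow> \<beta> y \<in> carrier G" using beta_M Mc by auto
  have beta_mult: "\<And>y y'. y \<in> A4c \<Longrightarrow> y' \<in> A4c \<Longrightarrow> \<beta> (y \<circ> y') = \<beta> y \<otimes> \<beta> y'"
  proof -
    fix y y' assume y: "y \<in> A4c" "y' \<in> A4c"
    have c: "\<alpha> y \<in> carrier G" "\<alpha> y' \<in> carrier G" using alpha_c y by auto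
    have "\<beta> y \<otimes> \<beta> y' = s \<otimes> \<alpha> y \<otimes> (s \<otimes> s) \<otimes> \<alpha> y' \<otimes> s" using c sc by (simp add: \<beta>_def m_assoc)
    then show "\<beta> (y \<circ> y') = \<beta> y \<otimes> \<beta> y'" using ss c sc alpha_mult[OF y] by (simp add: \<beta>_def m_assoc)
  qed
  have comm: "\<And>x y. x \<in> A4c \<Longrightarrow> y \<in> A4c \<Longrightarrow> \<alpha> x \<otimes> \<beta> y = \<beta> y \<otimes> \<alpha> x"
    using KM_comm alpha_K beta_M by auto
  have sA: "\<And>x. x \<in> A4c \<Longrightarrow> s \<otimes> \<alpha> x = \<beta> x \<otimes> s"
    using ss sc alpha_c by (simp add: \<beta>_def m_assoc)
  have s_B: "\<And>y. y \<in> A4c \<Longrightarrow> s \<otimes> \<beta> y = \<alpha> y \<otimes> s"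
    using ss sc alpha_c by (simp add: \<beta>_def m_assoc[symmetric])
  define F2 where "F2 = (\<lambda>(x, y, \<sigma>). \<alpha> x \<otimes> \<beta> y \<otimes> (if \<sigma> then s else \<one>))"
  have sigc: "\<And>\<sigma>. (if \<sigma> then s else \<one>) \<in> carrier G" using sc by auto
  have carW: "carrier (wreath_C2 (alt_group 4)) = A4c \<times> A4c \<times> UNIV" by (simp add: wreath_C2_def)
  have multW: "\<And>x y \<sigma> x' y' \<sigma>'. (x, y, \<sigma>) \<otimes>\<^bsub>wreath_C2 (alt_group 4)\<^esub> (x', y', \<sigma>') =
      (if \<sigma> then (x \<circ> y', y \<circ> x', \<sigma> \<noteq> \<sigma>') else (x \<circ> x', y \<circ> y', \<sigma> \<noteq> \<sigma>'))"
    by (simp add: wreath_C2_def wreath_mult_def alt_group_mult)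
  have hom: "F2 \<in> hom (wreath_C2 (alt_group 4)) (G\<lparr>carrier := E\<rparr>)"
  proof (rule homI)
    fix w assume "w \<in> carrier (wreath_C2 (alt_group 4))"
    then obtain x y \<sigma> where w: "w = (x, y, \<sigma>)" "x \<in> A4c" "y \<in> A4c" using carW by auto
    have "\<alpha> x \<in> E" "\<beta> y \<in> E" using alpha_K beta_M w K_sub_B M_sub_B by auto
    moreover have "(if \<sigma> then s else \<one>) \<in> E" using s_E subgroup.one_closed[OF sE] by auto
    ultimately show "F2 w \<in> carrier (G\<lparr>carrier := E\<rparr>)"
      using w subgroup.m_closed[OF sE] by (simp add: F2_def)
  next
    fix w w' assume "w \<in> carrier (wreath_C2 (alt_group 4))" "w' \<in> carrier (wreath_C2 (alt_group 4))"
    then obtain x y \<sigma> x' y' \<sigma>' where w: "w = (x, y, \<sigma>)" "x \<in> A4c" "y \<in> A4c"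
      "w' = (x', y', \<sigma>')" "x' \<in> A4c" "y' \<in> A4c" using carW by auto
    have c: "\<alpha> x \<in> carrier G" "\<alpha> x' \<in> carrier G" "\<beta> y \<in> carrier G" "\<beta> y' \<in> carrier G"
      "\<alpha> y' \<in> carrier G" "\<beta> x' \<in> carrier G"
      using alpha_c beta_c w by auto
    show "F2 (w \<otimes>\<^bsub>wreath_C2 (alt_group 4)\<^esub> w') = F2 w \<otimes>\<^bsub>G\<lparr>carrier := E\<rparr>\<^esub> F2 w'"
    proof (cases \<sigma>)
      case False
      have "F2 w \<otimes> F2 w' = \<alpha> x \<otimes> (\<beta> y \<otimes> \<alpha> x') \<otimes> \<beta> y' \<otimes> (if \<sigma>' then s else \<one>)"
        using False w c sigc by (simp add: F2_def m_assoc)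
      also have "\<dots> = \<alpha> x \<otimes> (\<alpha> x' \<otimes> \<beta> y) \<otimes> \<beta> y' \<otimes> (if \<sigma>' then s else \<one>)"
        using comm w by simp
      also have "\<dots> = \<alpha> (x \<circ> x') \<otimes> \<beta> (y \<circ> y') \<otimes> (if \<sigma>' then s else \<one>)"
        using alpha_mult beta_mult w c by (simp add: m_assoc)
      also have "\<dots> = F2 (w \<otimes>\<^bsub>wreath_C2 (alt_group 4)\<^esub> w')"
        using False w multW by (simp add: F2_def)
      finally show ?thesis by simp
    next
      case True
      have "F2 w \<otimes> F2 w' = \<alpha> x \<otimes> \<beta> y \<otimes> (s \<otimes> \<alpha> x') \<otimes> \<beta> y' \<otimes> (if \<sigma>' then s else \<one>)"
        using True w c sigc sc by (simp add: F2_def m_assoc)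
      also have "\<dots> = \<alpha> x \<otimes> \<beta> y \<otimes> \<beta> x' \<otimes> (s \<otimes> \<beta> y') \<otimes> (if \<sigma>' then s else \<one>)"
        using sA w c sc by (simp add: m_assoc)
      also have "\<dots> = \<alpha> x \<otimes> (\<beta> y \<otimes> \<beta> x' \<otimes> \<alpha> y') \<otimes> (s \<otimes> (if \<sigma>' then s else \<one>))"
        using s_B w c sc sigc by (simp add: m_assoc)
      also have "\<beta> y \<otimes> \<beta> x' \<otimes> \<alpha> y' = \<alpha> y' \<otimes> (\<beta> y \<otimes> \<beta> x')"
      proof -
        have "\<beta> y \<otimes> \<beta> x' \<in> M" using subgroup.m_closed[OF sM beta_M beta_M] w by blast
        then show ?thesis using KM_comm alpha_K w by metis
      qed
      also have "s \<otimes> (if \<sigma>' then s else \<one>) = (if \<not> \<sigma>' then s else \<one>)" using ss sc by auto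
      also have "\<alpha> x \<otimes> (\<alpha> y' \<otimes> (\<beta> y \<otimes> \<beta> x')) \<otimes> (if \<not> \<sigma>' then s else \<one>)
          = \<alpha> (x \<circ> y') \<otimes> \<beta> (y \<circ> x') \<otimes> (if \<not> \<sigma>' then s else \<one>)"
        using alpha_mult beta_mult w c by (simp add: m_assoc)
      also have "\<dots> = F2 (w \<otimes>\<^bsub>wreath_C2 (alt_group 4)\<^esub> w')"
        using True w multW by (simp add: F2_def)
      finally show ?thesis by simp
    qed
  qed
  have inj: "inj_on F2 (carrier (wreath_C2 (alt_group 4)))"
  proof (rule inj_onI)
    fix w w' assume "w \<in> carrier (wreath_C2 (alt_group 4))" "w' \<in> carrier (wreath_C2 (alt_group 4))"
      and e: "F2 w = F2 w'"
    then obtain x y \<sigma> x' y' \<sigma>' where w: "w = (x, y, \<sigma>)" "x \<in> A4c" "y \<in> A4c"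
      "w' = (x', y', \<sigma>')" "x' \<in> A4c" "y' \<in> A4c" using carW by auto
    have c: "\<alpha> x \<in> carrier G" "\<alpha> x' \<in> carrier G" "\<beta> y \<in> carrier G" "\<beta> y' \<in> carrier G"
      using alpha_c beta_c w by auto
    have inB: "\<alpha> x \<otimes> \<beta> y \<in> B" "\<alpha> x' \<otimes> \<beta> y' \<in> B"
      using subgroup.m_closed[OF sB] alpha_K beta_M w K_sub_B M_sub_B by (metis subsetD)+
    have e': "\<alpha> x \<otimes> \<beta> y \<otimes> (if \<sigma> then s else \<one>) = \<alpha> x' \<otimes> \<beta> y' \<otimes> (if \<sigma>' then s else \<one>)"
      using e w by (simp add: F2_def)
    have sig: "\<sigma> = \<sigma>'"
    proof (rule ccontr)
      assume ne: "\<sigma> \<noteq> \<sigma>'"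
      have gen: "\<And>u v. u \<in> B \<Longrightarrow> v \<in> B \<Longrightarrow> u \<otimes> s = v \<Longrightarrow> False"
      proof -
        fix u v assume uv: "u \<in> B" "v \<in> B" "u \<otimes> s = v"
        have uc: "u \<in> carrier G" using uv Bc by auto
        have "inv u \<otimes> v \<in> B" using subgroup.m_closed[OF sB subgroup.m_inv_closed[OF sB uv(1)] uv(2)] .
        moreover have "inv u \<otimes> v = s" using uv(3)[symmetric] uc sc by (simp add: m_assoc[symmetric])
        ultimately show False using snL by auto
      qed
      show False
      proof (cases \<sigma>)
        case True
        then have "\<not> \<sigma>'" using ne by simp
        then show False using gen[OF inB] e' True c by simp
      next
        case False
        then have "\<sigma>'" using ne by simp
        then show False using gen[OF inB(2,1)] e' False c by simp
      qed
    qed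
    then have "\<alpha> x \<otimes> \<beta> y = \<alpha> x' \<otimes> \<beta> y'" using e' c sigc sc
      by (cases \<sigma>) (simp_all add: right_cancel)
    then have ab: "\<alpha> x = \<alpha> x'" "\<beta> y = \<beta> y'" using KM_unique alpha_K beta_M w by blast+
    have "x = x'" using inj_onD[OF alpha_inj] ab(1) w by blast
    moreover have "\<alpha> y = \<alpha> y'"
    proof -
      have "s \<otimes> \<beta> y \<otimes> s = s \<otimes> \<beta> y' \<otimes> s" using ab(2) by simp
      then show ?thesis using ss sc alpha_c w by (simp add: \<beta>_def m_assoc[symmetric])
    qed
    then have "y = y'" using inj_onD[OF alpha_inj] w by simp
    ultimately show "w = w'" using w sig by simp
  qed
  have sub: "F2 ` carrier (wreath_C2 (alt_group 4)) \<subseteq> E" using hom by (auto simp: hom_def)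
  have "card (carrier (wreath_C2 (alt_group 4))) = 288"
    using cA4 carW by (simp add: card_cartesian_product)
  then have "card (F2 ` carrier (wreath_C2 (alt_group 4))) = 288" using card_image[OF inj] by simp
  moreover have "card E = 288" using cardE card_B B4 cA4 c12 by simp
  ultimately have img: "F2 ` carrier (wreath_C2 (alt_group 4)) = E"
    using card_subset_eq[OF fE sub] by simp
  have bij: "bij_betw F2 (carrier (wreath_C2 (alt_group 4))) (carrier (G\<lparr>carrier := E\<rparr>))"
    using inj img by (simp add: bij_betw_def)
  have cl: "\<And>u v. u \<in> carrier (wreath_C2 (alt_group 4)) \<Longrightarrow> v \<in> carrier (wreath_C2 (alt_group 4))
      \<Longrightarrow> u \<otimes>\<^bsub>wreath_C2 (alt_group 4)\<^esub> v \<in> carrier (wreath_C2 (alt_group 4))"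
    using A4_mult by (auto simp: carW multW)
  have "inv_into (carrier (wreath_C2 (alt_group 4))) F2 \<in> iso (G\<lparr>carrier := E\<rparr>) (wreath_C2 (alt_group 4))"
    by (rule iso_sym_gen[OF hom bij cl])
  then show ?thesis by (rule is_isoI)
qed

end


theorem mainTheorem12:
  fixes G :: "('a, 'b) monoid_scheme" and Gx Ge :: "'a set"
  assumes "group G"
    and "subgroup Gx G" and "subgroup Ge G"
    and "finite Gx" and "finite Ge"
    and "sub_index G Gx (Gx \<inter> Ge) = 5"
    and "sub_index G Ge (Gx \<inter> Ge) = 2"
    and "primitive_amalgam G Gx Ge"
    and "Gxy1 G Gx Ge = {\<one>\<^bsub>G\<^esub>}"
    and "Gx1 G Gx Ge \<noteq> {\<one>\<^bsub>G\<^esub>}"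
    and "G\<lparr>carrier := Gx\<rparr> Mod Gx1 G Gx Ge \<cong> alt_group 5"
  shows "G\<lparr>carrier := Gx\<rparr> \<cong> alt_group 5 \<times>\<times> alt_group 4 \<and>
         G\<lparr>carrier := Ge\<rparr> \<cong> wreath_C2 (alt_group 4)"
proof -
  have A: "amal G Gx Ge"
    by (intro amal.intro amal_axioms.intro assms(1-7) assms(9) assms(10))
  interpret amal G Gx Ge by (rule A)
  obtain \<psi> where P: "amal_psi G Gx Ge \<psi>" and B4: "\<psi> ` (Gx \<inter> Ge) = A4c"
    using exists_psi4[OF assms(11)] by blast
  interpret P4: amal_psi4 G Gx Ge \<psi>
    by (intro amal_psi4.intro amal_psi4_axioms.intro P B4)
  have "card (Gx1 G Gx Ge) = 4 \<or> card (Gx1 G Gx Ge) = 12" by (rule P4.card_K_cases)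
  then have c12: "card (Gx1 G Gx Ge) = 12" using P4.case4_false by blast
  interpret P12: amal12 G Gx Ge \<psi>
    by (intro amal12.intro amal12_axioms.intro P4.amal_psi4_axioms c12)
  show ?thesis using P12.L_iso P12.E_iso by blast
qed



end
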